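(* Let $\beta>0$, $\eta>0$, $0\le T\le1$ and $-\frac12<s<0$. Then there is a constant $C>0$, independent of $T$, $u$, $v$ (depending on $s$ and the fixed parameters), such that $$\Big\|\int_0^tS(t-t')\partial_x(uv)(t')\,dt'\Big\|_{X_T^s}\le C\,e^{\frac{\eta T}{2}}T^{\frac{1+2s}{4}}\|u\|_{X_T^s}\|v\|_{X_T^s}$$ for all $u,v\in X_T^s$.
   Context: $S(t)f=\big(e^{iq(\xi)t-p(\xi)t}\widehat f\big)^\vee$ for $t\ge0$, with $q(\xi)=\beta\xi|\xi|$ and $p(\xi)=\eta(\xi^2-|\xi|)$. For $s<0$ and $0\le T\le1$, $X_T^s=\{u\in C([0,T];H^s(\mathbb{R})):\|u\|_{X_T^s}<\infty\}$ where $\|u\|_{X_T^s}=\sup_{t\in(0,T]}\big(\|u(t)\|_{H^s}+t^{|s|/2}\|u(t)\|_{L^2}\big)$; the $X_T^s$ norm on the left is applied to the function $t\mapsto\int_0^tS(t-t')\partial_x(uv)(t')dt'$. *)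

theory Defs
  imports "HOL-Analysis.Analysis"
begin

text \<open>
  Elements of H^s(R) (possibly with s < 0, i.e. distributions) are represented
  on the Fourier side: a function f :: real => complex stands for the tempered
  distribution whose Fourier transform (convention: hat f(xi) = int e^(-i x xi) f(x) dx)
  is f.  Then ||f||_{H^s}^2 = (1/(2 pi)) int (1+xi^2)^s |hat f(xi)|^2 dxi and
  the L^2 norm is the case s = 0 (Plancherel).
\<close>

definition Hs_sq :: "real \<Rightarrow> (real \<Rightarrow> complex) \<Rightarrow> ennreal" where
  "Hs_sq s f = (\<integral>\<^sup>+ \<xi>. ennreal ((1 + \<xi>\<^sup>2) powr s * (cmod (f \<xi>))\<^sup>2) \<partial>lborel)"

definition in_Hs :: "real \<Rightarrow> (real \<Rightarrow> complex) \<Rightarrow> bool" where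
  "in_Hs s f \<longleftrightarrow> f \<in> borel_measurable lborel \<and> Hs_sq s f < \<infinity>"

definition Hs_norm :: "real \<Rightarrow> (real \<Rightarrow> complex) \<Rightarrow> real" where
  "Hs_norm s f = sqrt (enn2real (Hs_sq s f) / (2 * pi))"

abbreviation in_L2 :: "(real \<Rightarrow> complex) \<Rightarrow> bool" where
  "in_L2 f \<equiv> in_Hs 0 f"

abbreviation L2_norm :: "(real \<Rightarrow> complex) \<Rightarrow> real" where
  "L2_norm f \<equiv> Hs_norm 0 f"

text \<open>A time-dependent function u is given by u t = Fourier transform of u(t).\<close>

definition Xweight :: "real \<Rightarrow> (real \<Rightarrow> real \<Rightarrow> complex) \<Rightarrow> real \<Rightarrow> real" where
  "Xweight s u t = Hs_norm s (u t) + t powr (\<bar>s\<bar> / 2) * L2_norm (u t)"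

definition in_X :: "real \<Rightarrow> real \<Rightarrow> (real \<Rightarrow> real \<Rightarrow> complex) \<Rightarrow> bool" where
  "in_X s T u \<longleftrightarrow>
     (\<forall>t\<in>{0..T}. in_Hs s (u t)) \<and>
     (\<forall>t0\<in>{0..T}. ((\<lambda>t. Hs_norm s (u t - u t0)) \<longlongrightarrow> 0) (at t0 within {0..T})) \<and>
     (\<forall>t\<in>{0<..T}. in_L2 (u t)) \<and>
     bdd_above (Xweight s u ` {0<..T})"

definition X_norm :: "real \<Rightarrow> real \<Rightarrow> (real \<Rightarrow> real \<Rightarrow> complex) \<Rightarrow> real" where
  "X_norm s T u = Sup (Xweight s u ` {0<..T})"

definition qsym :: "real \<Rightarrow> real \<Rightarrow> real" where
  "qsym \<beta> \<xi> = \<beta> * \<xi> * \<bar>\<xi>\<bar>"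

definition psym :: "real \<Rightarrow> real \<Rightarrow> real" where
  "psym \<eta> \<xi> = \<eta> * (\<xi>\<^sup>2 - \<bar>\<xi>\<bar>)"

text \<open>Fourier transform of a product: (fg)^ = (1/(2 pi)) hat f * hat g.\<close>
definition fconv :: "(real \<Rightarrow> complex) \<Rightarrow> (real \<Rightarrow> complex) \<Rightarrow> real \<Rightarrow> complex" where
  "fconv f g \<xi> = complex_of_real (1 / (2 * pi)) * (\<integral>\<zeta>. f (\<xi> - \<zeta>) * g \<zeta> \<partial>lborel)"

text \<open>Fourier transform (in x) of the Duhamel term
  int_0^t S(t-t') d_x(uv)(t') dt'.\<close>
definition duhamel :: "real \<Rightarrow> real \<Rightarrow> (real \<Rightarrow> real \<Rightarrow> complex) \<Rightarrow> (real \<Rightarrow> real \<Rightarrow> complex)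
    \<Rightarrow> real \<Rightarrow> real \<Rightarrow> complex" where
  "duhamel \<beta> \<eta> u v t \<xi> =
     set_lebesgue_integral lborel {0..t}
       (\<lambda>t'. exp (complex_of_real (t - t') * (\<i> * complex_of_real (qsym \<beta> \<xi>) - complex_of_real (psym \<eta> \<xi>)))
             * (\<i> * complex_of_real \<xi>) * fconv (u t') (v t') \<xi>)"

end

theory Submission
  imports Defs
begin


lemma norm_integral_le_nn:
  fixes f :: "'a \<Rightarrow> 'b::{banach,second_countable_topology}"
  shows "ennreal (norm (integral\<^sup>L M f)) \<le> (\<integral>\<^sup>+ x. ennreal (norm (f x)) \<partial>M)"
proof (cases "integrable M f")
  case True thus ?thesis by (rule integral_norm_bound_ennreal)
next
  case False thus ?thesis by (simp add: not_integrable_integral_eq)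
qed

lemma Hs_sq_finite_eq:
  assumes "Hs_sq s f < \<infinity>"
  shows "Hs_sq s f = ennreal (2*pi*(Hs_norm s f)\<^sup>2)"
proof -
  have nn: "enn2real (Hs_sq s f) \<ge> 0" by simp
  have "(Hs_norm s f)\<^sup>2 = enn2real (Hs_sq s f) / (2*pi)"
    unfolding Hs_norm_def using nn by (simp add: real_sqrt_pow2)
  hence "2*pi*(Hs_norm s f)\<^sup>2 = enn2real (Hs_sq s f)" by simp
  thus ?thesis using assms by (simp add: less_top ennreal_enn2real)
qed

lemma Hs_sq_0: "Hs_sq 0 f = (\<integral>\<^sup>+ \<xi>. ennreal ((cmod (f \<xi>))\<^sup>2) \<partial>lborel)"
proof -
  have "\<And>\<xi>::real. (1 + \<xi>\<^sup>2) powr 0 = 1"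
    by (metis add_pos_nonneg powr_zero_eq_one zero_less_one zero_le_power2 less_irrefl)
  thus ?thesis unfolding Hs_sq_def by simp
qed

lemma CS_translate:
  fixes f g :: "real \<Rightarrow> complex"
  assumes [measurable]: "f \<in> borel_measurable borel" "g \<in> borel_measurable borel"
  shows "(\<integral>\<^sup>+\<zeta>. ennreal (cmod (f (\<xi>-\<zeta>)) * cmod (g \<zeta>)) \<partial>lborel)\<^sup>2
     \<le> (\<integral>\<^sup>+\<zeta>. ennreal ((cmod (f \<zeta>))\<^sup>2) \<partial>lborel) * (\<integral>\<^sup>+\<zeta>. ennreal ((cmod (g \<zeta>))\<^sup>2) \<partial>lborel)"
proof -
  have "(\<integral>\<^sup>+\<zeta>. ennreal (cmod (f (\<xi>-\<zeta>)) * cmod (g \<zeta>)) \<partial>lborel)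
      = (\<integral>\<^sup>+\<zeta>. ennreal (cmod (f (\<xi>-\<zeta>))) * ennreal (cmod (g \<zeta>)) \<partial>lborel)"
    by (simp add: ennreal_mult)
  also have "(\<dots>)\<^sup>2 \<le> (\<integral>\<^sup>+\<zeta>. (ennreal (cmod (f (\<xi>-\<zeta>))))^2 \<partial>lborel) * (\<integral>\<^sup>+\<zeta>. (ennreal (cmod (g \<zeta>)))^2 \<partial>lborel)"
    by (rule Cauchy_Schwarz_nn_integral) auto
  also have "(\<integral>\<^sup>+\<zeta>. (ennreal (cmod (f (\<xi>-\<zeta>))))^2 \<partial>lborel) = (\<integral>\<^sup>+\<zeta>. ennreal ((cmod (f (\<xi>-\<zeta>)))\<^sup>2) \<partial>lborel)"
    by (simp add: ennreal_power)
  also have "\<dots> = (\<integral>\<^sup>+\<zeta>. ennreal ((cmod (f \<zeta>))\<^sup>2) \<partial>lborel)"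
    using nn_integral_real_affine[of "\<lambda>\<zeta>. ennreal ((cmod (f \<zeta>))\<^sup>2)" "-1" \<xi>] by simp
  also have "(\<integral>\<^sup>+\<zeta>. (ennreal (cmod (g \<zeta>)))^2 \<partial>lborel) = (\<integral>\<^sup>+\<zeta>. ennreal ((cmod (g \<zeta>))\<^sup>2) \<partial>lborel)"
    by (simp add: ennreal_power)
  finally show ?thesis .
qed


lemma Hs_norm_nonneg: "Hs_norm s f \<ge> 0"
  unfolding Hs_norm_def by simp

lemma ennreal_sq_le_imp:
  assumes "(ennreal x)\<^sup>2 \<le> ennreal c" "x \<ge> 0" "c \<ge> 0"
  shows "x \<le> sqrt c"
proof -
  have "ennreal (x\<^sup>2) \<le> ennreal c" using assms by (simp add: ennreal_power)
  hence "x\<^sup>2 \<le> c" using assms(3) by (simp add: ennreal_le_iff)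
  thus ?thesis using assms(2) by (simp add: real_le_rsqrt)
qed

lemma fconv_bound:
  assumes f: "in_L2 f" and g: "in_L2 g"
  shows "cmod (fconv f g \<xi>) \<le> L2_norm f * L2_norm g"
proof -
  have [measurable]: "f \<in> borel_measurable borel" "g \<in> borel_measurable borel"
    using f g unfolding in_Hs_def by auto
  let ?I = "\<integral>\<zeta>. f (\<xi> - \<zeta>) * g \<zeta> \<partial>lborel"
  have "ennreal (cmod ?I) \<le> (\<integral>\<^sup>+\<zeta>. ennreal (cmod (f (\<xi>-\<zeta>) * g \<zeta>)) \<partial>lborel)"
    using norm_integral_le_nn[of lborel "\<lambda>\<zeta>. f (\<xi> - \<zeta>) * g \<zeta>"] by simp
  also have "\<dots> = (\<integral>\<^sup>+\<zeta>. ennreal (cmod (f (\<xi>-\<zeta>)) * cmod (g \<zeta>)) \<partial>lborel)"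
    by (simp add: norm_mult)
  finally have 1: "(ennreal (cmod ?I))\<^sup>2 \<le> (\<integral>\<^sup>+\<zeta>. ennreal (cmod (f (\<xi>-\<zeta>)) * cmod (g \<zeta>)) \<partial>lborel)\<^sup>2"
    by (simp add: power_mono)
  also have "\<dots> \<le> Hs_sq 0 f * Hs_sq 0 g"
    unfolding Hs_sq_0 by (rule CS_translate) auto
  also have "\<dots> = ennreal ((2*pi*(L2_norm f)\<^sup>2) * (2*pi*(L2_norm g)\<^sup>2))"
  proof -
    have "Hs_sq 0 f = ennreal (2*pi*(L2_norm f)\<^sup>2)" "Hs_sq 0 g = ennreal (2*pi*(L2_norm g)\<^sup>2)"
      using f g unfolding in_Hs_def by (auto intro: Hs_sq_finite_eq)
    thus ?thesis by (simp only: ennreal_mult'' pi_ge_zero mult_nonneg_nonneg zero_le_numeral zero_le_power2)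
  qed
  finally have "cmod ?I \<le> sqrt ((2*pi*(L2_norm f)\<^sup>2) * (2*pi*(L2_norm g)\<^sup>2))"
    by (rule ennreal_sq_le_imp) (simp_all add: pi_ge_zero)
  also have "\<dots> = 2*pi*(L2_norm f * L2_norm g)"
  proof -
    have "(2*pi*(L2_norm f)\<^sup>2) * (2*pi*(L2_norm g)\<^sup>2) = (2*pi*(L2_norm f * L2_norm g))\<^sup>2"
      by (simp add: power2_eq_square)
    moreover have "2*pi*(L2_norm f * L2_norm g) \<ge> 0"
      using Hs_norm_nonneg[of 0 f] Hs_norm_nonneg[of 0 g] by (simp add: pi_ge_zero)
    ultimately show ?thesis by simp
  qed
  finally have "cmod ?I \<le> 2*pi*(L2_norm f * L2_norm g)" .
  moreover have "cmod (fconv f g \<xi>) = cmod ?I / (2*pi)"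
    unfolding fconv_def by (simp add: norm_mult norm_divide pi_ge_zero)
  ultimately show ?thesis by (simp add: divide_le_eq pi_gt_zero mult.commute)
qed

lemma L2_from_X:
  assumes "in_X s T u" "t \<in> {0<..T}" "s < 0"
  shows "L2_norm (u t) \<le> t powr (s/2) * X_norm s T u"
proof -
  have "Xweight s u t \<le> X_norm s T u"
    unfolding X_norm_def using assms by (intro cSup_upper) (auto simp: in_X_def)
  hence "t powr (-s/2) * L2_norm (u t) \<le> X_norm s T u"
    unfolding Xweight_def using Hs_norm_nonneg[of s "u t"] assms(3) by simp
  hence "t powr (s/2) * (t powr (-s/2) * L2_norm (u t)) \<le> t powr (s/2) * X_norm s T u"
    by (simp add: mult_left_mono)
  moreover have "t powr (s/2) * t powr (-s/2) = 1" using assms(2)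
    by (simp add: powr_add[symmetric])
  ultimately show ?thesis by (simp add: mult.assoc[symmetric])
qed


lemma nn_pow_0c:
  fixes a c :: real assumes "a > -1" "c \<ge> 0"
  shows "(\<integral>\<^sup>+ x. ennreal (indicator {0..c} x * x powr a) \<partial>lborel) = ennreal (c powr (a+1) / (a+1))"
  using nn_integral_has_integral_lebesgue[OF _ has_integral_powr_from_0[OF assms]] by simp

lemma nn_pow_inf:
  fixes e c :: real assumes "e < -1" "c > 0"
  shows "(\<integral>\<^sup>+ x. ennreal (indicator {c..} x * x powr e) \<partial>lborel) = ennreal (-(c powr (e+1)) / (e+1))"
  using nn_integral_has_integral_lebesgue[OF _ has_integral_powr_to_inf[OF assms]] by simp

lemma nn_abs_sym:
  fixes g :: "real \<Rightarrow> real"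
  assumes [measurable]: "g \<in> borel_measurable borel" and nn: "\<And>x. g x \<ge> 0"
  shows "(\<integral>\<^sup>+ \<xi>. ennreal (g \<bar>\<xi>\<bar>) \<partial>lborel) \<le> 2 * (\<integral>\<^sup>+ \<xi>. ennreal (indicator {0..} \<xi> * g \<xi>) \<partial>lborel)"
proof -
  have "(\<integral>\<^sup>+ \<xi>. ennreal (g \<bar>\<xi>\<bar>) \<partial>lborel) \<le>
        (\<integral>\<^sup>+ \<xi>. ennreal (indicator {0..} \<xi> * g \<xi>) + ennreal (indicator {0..} (0 + (-1) * \<xi>) * g (0 + (-1) * \<xi>)) \<partial>lborel)"
    by (intro nn_integral_mono) (auto simp: indicator_def nn)
  also have "\<dots> = (\<integral>\<^sup>+ \<xi>. ennreal (indicator {0..} \<xi> * g \<xi>) \<partial>lborel) +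
       (\<integral>\<^sup>+ \<xi>. ennreal (indicator {0..} (0 + (-1) * \<xi>) * g (0 + (-1) * \<xi>)) \<partial>lborel)"
    by (intro nn_integral_add) auto
  also have "(\<integral>\<^sup>+ \<xi>. ennreal (indicator {0..} (0 + (-1) * \<xi>) * g (0 + (-1) * \<xi>)) \<partial>lborel)
       = (\<integral>\<^sup>+ \<xi>. ennreal (indicator {0..} \<xi> * g \<xi>) \<partial>lborel)"
    using nn_integral_real_affine[of "\<lambda>\<xi>. ennreal (indicator {0..} \<xi> * g \<xi>)" "-1" 0] by simp
  finally show ?thesis by (simp add: mult_2)
qed

lemma exp_neg_le: fixes y :: real assumes "y > 0" shows "exp (-y) \<le> 2 / y\<^sup>2"
proof -
  have "1 + y + y\<^sup>2/2 \<le> exp y" using exp_lower_Taylor_quadratic[of y] assms by simp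
  hence "y\<^sup>2/2 \<le> exp y" using assms by simp
  hence "exp (-y) * (y\<^sup>2/2) \<le> exp (-y) * exp y" by (simp add: mult_left_mono)
  hence "exp (-y) * y\<^sup>2 \<le> 2" by (simp add: exp_minus field_simps)
  thus ?thesis using assms by (simp add: field_simps)
qed


lemma G_bound:
  fixes \<sigma> \<eta> \<tau> :: real
  assumes s1: "-1/2 < \<sigma>" and s2: "\<sigma> \<le> 0" and eta: "\<eta> > 0" and tau: "\<tau> > 0"
  shows "(\<integral>\<^sup>+ \<xi>. ennreal ((1+\<xi>\<^sup>2) powr \<sigma> * \<xi>\<^sup>2 * exp (-(\<eta>*\<xi>\<^sup>2*\<tau>))) \<partial>lborel)
     \<le> ennreal (2 * (1/(3+2*\<sigma>) + 2/(\<eta>\<^sup>2*(1-2*\<sigma>))) * \<tau> powr (-3/2-\<sigma>))"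
proof -
  define R where "R = \<tau> powr (-1/2)"
  have R: "R > 0" unfolding R_def using tau by simp
  define K where "K = 2/(\<eta>\<^sup>2*\<tau>\<^sup>2)"
  have K: "K > 0" unfolding K_def using eta tau by simp
  define g where "g x = indicator {0..R} x * x powr (2+2*\<sigma>) + K * (indicator {R..} x * x powr (2*\<sigma>-2))" for x :: real
  have gnn: "g x \<ge> 0" for x unfolding g_def using K by (auto simp: indicator_def)
  have pt: "(1+\<xi>\<^sup>2) powr \<sigma> * \<xi>\<^sup>2 * exp (-(\<eta>*\<xi>\<^sup>2*\<tau>)) \<le> g \<bar>\<xi>\<bar>" for \<xi> :: real
  proof (cases "\<xi> = 0")
    case True thus ?thesis using gnn by simp
  next
    case False
    define x where "x = \<bar>\<xi>\<bar>"
    have x: "x > 0" using False x_def by simp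
    have xx: "\<xi>\<^sup>2 = x\<^sup>2" unfolding x_def by simp
    have "(1+x\<^sup>2) powr \<sigma> \<le> (x\<^sup>2) powr \<sigma>"
      using x s2 by (intro powr_mono2') auto
    also have "(x\<^sup>2) powr \<sigma> = x powr (2*\<sigma>)"
    proof -
      have "x\<^sup>2 = x powr 2" using x by simp
      hence "(x\<^sup>2) powr \<sigma> = (x powr 2) powr \<sigma>" by simp
      also have "\<dots> = x powr (2*\<sigma>)" by (rule powr_powr)
      finally show ?thesis .
    qed
    finally have w: "(1+x\<^sup>2) powr \<sigma> \<le> x powr (2*\<sigma>)" .
    have e: "exp (-(\<eta>*x\<^sup>2*\<tau>)) > 0" by simp
    have "(1+\<xi>\<^sup>2) powr \<sigma> * \<xi>\<^sup>2 * exp (-(\<eta>*\<xi>\<^sup>2*\<tau>)) \<le> x powr (2*\<sigma>) * x\<^sup>2 * exp (-(\<eta>*x\<^sup>2*\<tau>))"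
      unfolding xx using w e by (intro mult_right_mono) auto
    also have "x powr (2*\<sigma>) * x\<^sup>2 = x powr (2+2*\<sigma>)"
    proof -
      have "x\<^sup>2 = x powr 2" using x by simp
      hence "x powr (2*\<sigma>) * x\<^sup>2 = x powr (2*\<sigma>) * x powr 2" by simp
      also have "\<dots> = x powr (2*\<sigma> + 2)" by (rule powr_add[symmetric])
      finally show ?thesis by (simp add: add.commute)
    qed
    finally have 1: "(1+\<xi>\<^sup>2) powr \<sigma> * \<xi>\<^sup>2 * exp (-(\<eta>*\<xi>\<^sup>2*\<tau>)) \<le> x powr (2+2*\<sigma>) * exp (-(\<eta>*x\<^sup>2*\<tau>))" .
    show ?thesis
    proof (cases "x \<le> R")
      case True
      have A: "x powr (2+2*\<sigma>) * exp (-(\<eta>*x\<^sup>2*\<tau>)) \<le> x powr (2+2*\<sigma>)"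
        using eta tau by (intro mult_left_le) auto
      have B: "x powr (2+2*\<sigma>) \<le> g x" unfolding g_def using True x K
        by (simp add: indicator_def)
      from 1 A B have "(1+\<xi>\<^sup>2) powr \<sigma> * \<xi>\<^sup>2 * exp (-(\<eta>*\<xi>\<^sup>2*\<tau>)) \<le> g x" by linarith
      thus ?thesis unfolding x_def .
    next
      case False
      have y: "\<eta>*x\<^sup>2*\<tau> > 0" using x eta tau by simp
      have "x powr (2+2*\<sigma>) * exp (-(\<eta>*x\<^sup>2*\<tau>)) \<le> x powr (2+2*\<sigma>) * (2/(\<eta>*x\<^sup>2*\<tau>)\<^sup>2)"
        by (intro mult_left_mono exp_neg_le y) simp
      also have "\<dots> = K * x powr (2*\<sigma>-2)"
      proof -
        have "x powr (2+2*\<sigma>) = x powr (2*\<sigma>-2) * x^4"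
        proof -
          have "x^4 = x powr 4" using x by simp
          hence "x powr (2*\<sigma>-2) * x^4 = x powr (2*\<sigma>-2) * x powr 4" by simp
          also have "\<dots> = x powr (2*\<sigma>-2 + 4)" by (rule powr_add[symmetric])
          finally show ?thesis by (simp add: algebra_simps)
        qed
        thus ?thesis unfolding K_def using x eta tau
          by (simp add: field_simps power2_eq_square power4_eq_xxxx)
      qed
      also have "\<dots> \<le> g x" unfolding g_def using False x K
        by (simp add: indicator_def)
      finally have B: "x powr (2+2*\<sigma>) * exp (-(\<eta>*x\<^sup>2*\<tau>)) \<le> g x" .
      from 1 B have "(1+\<xi>\<^sup>2) powr \<sigma> * \<xi>\<^sup>2 * exp (-(\<eta>*\<xi>\<^sup>2*\<tau>)) \<le> g x" by linarith
      thus ?thesis unfolding x_def .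
    qed
  qed
  have [measurable]: "g \<in> borel_measurable borel" unfolding g_def by measurable
  have "(\<integral>\<^sup>+ \<xi>. ennreal ((1+\<xi>\<^sup>2) powr \<sigma> * \<xi>\<^sup>2 * exp (-(\<eta>*\<xi>\<^sup>2*\<tau>))) \<partial>lborel)
      \<le> (\<integral>\<^sup>+ \<xi>. ennreal (g \<bar>\<xi>\<bar>) \<partial>lborel)"
    by (intro nn_integral_mono ennreal_leI pt)
  also have "\<dots> \<le> 2 * (\<integral>\<^sup>+ \<xi>. ennreal (indicator {0..} \<xi> * g \<xi>) \<partial>lborel)"
    by (rule nn_abs_sym) (auto simp: gnn)
  also have "(\<integral>\<^sup>+ \<xi>. ennreal (indicator {0..} \<xi> * g \<xi>) \<partial>lborel)
      = (\<integral>\<^sup>+ \<xi>. ennreal (indicator {0..R} \<xi> * \<xi> powr (2+2*\<sigma>)) + ennreal K * ennreal (indicator {R..} \<xi> * \<xi> powr (2*\<sigma>-2)) \<partial>lborel)"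
    using R K by (intro nn_integral_cong) (auto simp: g_def indicator_def ennreal_mult'' ennreal_plus[symmetric])
  also have "\<dots> = (\<integral>\<^sup>+ \<xi>. ennreal (indicator {0..R} \<xi> * \<xi> powr (2+2*\<sigma>)) \<partial>lborel)
       + ennreal K * (\<integral>\<^sup>+ \<xi>. ennreal (indicator {R..} \<xi> * \<xi> powr (2*\<sigma>-2)) \<partial>lborel)"
    by (simp add: nn_integral_add nn_integral_cmult)
  also have "\<dots> = ennreal (R powr (3+2*\<sigma>)/(3+2*\<sigma>)) + ennreal K * ennreal (-(R powr (2*\<sigma>-1))/(2*\<sigma>-1))"
    using nn_pow_0c[of "2+2*\<sigma>" R] nn_pow_inf[of "2*\<sigma>-2" R] s1 s2 R
    by (simp add: algebra_simps)
  also have "\<dots> = ennreal ((1/(3+2*\<sigma>) + 2/(\<eta>\<^sup>2*(1-2*\<sigma>))) * \<tau> powr (-3/2-\<sigma>))"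
  proof -
    have "R powr (3+2*\<sigma>) = \<tau> powr ((-1/2)*(3+2*\<sigma>))" unfolding R_def by (simp add: powr_powr)
    moreover have "(-1/2)*(3+2*\<sigma>) = -3/2-\<sigma>" by (simp add: field_simps)
    ultimately have a: "R powr (3+2*\<sigma>) = \<tau> powr (-3/2-\<sigma>)" by simp
    have b: "K * (-(R powr (2*\<sigma>-1))/(2*\<sigma>-1)) = 2/(\<eta>\<^sup>2*(1-2*\<sigma>)) * \<tau> powr (-3/2-\<sigma>)"
    proof -
      have "R powr (2*\<sigma>-1) = \<tau> powr ((-1/2)*(2*\<sigma>-1))" unfolding R_def by (simp add: powr_powr)
      moreover have "(-1/2)*(2*\<sigma>-1) = 1/2-\<sigma>" by (simp add: field_simps)
      ultimately have "R powr (2*\<sigma>-1) = \<tau> powr (1/2-\<sigma>)" by simp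
      moreover have "\<tau> powr (1/2-\<sigma>) = \<tau> powr (-3/2-\<sigma>) * \<tau>\<^sup>2"
      proof -
        have e: "1/2-\<sigma> = (-3/2-\<sigma>) + 2" by (simp add: field_simps)
        have "\<tau> powr (1/2-\<sigma>) = \<tau> powr (-3/2-\<sigma>) * \<tau> powr 2"
          by (subst e, rule powr_add)
        moreover have "\<tau> powr 2 = \<tau>\<^sup>2" using tau by (simp add: powr_numeral)
        ultimately show ?thesis by simp
      qed
      ultimately show ?thesis unfolding K_def using tau eta s2
        by (simp add: field_simps power2_eq_square)
    qed
    have nn1: "R powr (3+2*\<sigma>)/(3+2*\<sigma>) \<ge> 0" using s1 by simp
    have nn2: "-(R powr (2*\<sigma>-1))/(2*\<sigma>-1) \<ge> 0" using s2 by (simp add: divide_nonneg_neg)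
    have "ennreal (R powr (3+2*\<sigma>)/(3+2*\<sigma>)) + ennreal K * ennreal (-(R powr (2*\<sigma>-1))/(2*\<sigma>-1))
        = ennreal (R powr (3+2*\<sigma>)/(3+2*\<sigma>) + K * (-(R powr (2*\<sigma>-1))/(2*\<sigma>-1)))"
    proof -
      have n3: "0 \<le> K * (-(R powr (2*\<sigma>-1))/(2*\<sigma>-1))" using K nn2 by (intro mult_nonneg_nonneg) auto
      have "ennreal K * ennreal (-(R powr (2*\<sigma>-1))/(2*\<sigma>-1)) = ennreal (K * (-(R powr (2*\<sigma>-1))/(2*\<sigma>-1)))"
        using K nn2 by (intro ennreal_mult[symmetric]) auto
      thus ?thesis using ennreal_plus[OF nn1 n3] by metis
    qed
    also have "R powr (3+2*\<sigma>)/(3+2*\<sigma>) + K * (-(R powr (2*\<sigma>-1))/(2*\<sigma>-1))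
       = (1/(3+2*\<sigma>) + 2/(\<eta>\<^sup>2*(1-2*\<sigma>))) * \<tau> powr (-3/2-\<sigma>)"
      unfolding a b by (simp add: distrib_right)
    finally show ?thesis .
  qed
  also have "2 * ennreal ((1/(3+2*\<sigma>) + 2/(\<eta>\<^sup>2*(1-2*\<sigma>))) * \<tau> powr (-3/2-\<sigma>))
     = ennreal (2 * (1/(3+2*\<sigma>) + 2/(\<eta>\<^sup>2*(1-2*\<sigma>))) * \<tau> powr (-3/2-\<sigma>))"
  proof -
    have Y: "0 \<le> (1/(3+2*\<sigma>) + 2/(\<eta>\<^sup>2*(1-2*\<sigma>))) * \<tau> powr (-3/2-\<sigma>)"
      using s1 s2 by (intro mult_nonneg_nonneg add_nonneg_nonneg) auto
    have "ennreal (2 * ((1/(3+2*\<sigma>) + 2/(\<eta>\<^sup>2*(1-2*\<sigma>))) * \<tau> powr (-3/2-\<sigma>)))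
       = ennreal 2 * ennreal ((1/(3+2*\<sigma>) + 2/(\<eta>\<^sup>2*(1-2*\<sigma>))) * \<tau> powr (-3/2-\<sigma>))"
      by (rule ennreal_mult''[OF Y])
    thus ?thesis by (simp only: mult.assoc ennreal_numeral)
  qed
  finally show ?thesis .
qed


lemma half_powr: assumes "t > 0" shows "((t::real)/2) powr b = t powr b * 2 powr (-b)"
proof -
  have "(t/2) powr b = t powr b / 2 powr b" by (rule powr_divide)
  also have "1 / 2 powr b = 2 powr (-b)" by (rule powr_minus_divide[symmetric])
  hence "t powr b / 2 powr b = t powr b * 2 powr (-b)" by (metis times_divide_eq_right mult.right_neutral)
  finally show ?thesis .
qed

lemma J_bound:
  fixes t a s :: real
  assumes t: "0 < t" and a1: "0 < a" and a2: "a < 1" and s1: "-1 < s" and s2: "s < 0"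
  shows "(\<integral>\<^sup>+ y. ennreal (indicator {0<..<t} y * ((t-y) powr (-a) * y powr s)) \<partial>lborel)
    \<le> ennreal ((2 powr a/(1+s) + 2 powr (-s)/(1-a)) * t powr (1-a+s))"
proof -
  define A where "A = (t/2) powr (-a)"
  define B where "B = (t/2) powr s"
  have A: "A \<ge> 0" "B \<ge> 0" unfolding A_def B_def by auto
  have pt: "indicator {0<..<t} y * ((t-y) powr (-a) * y powr s)
      \<le> A * (indicator {0..t} y * y powr s) + B * (indicator {0<..<t} y * (t-y) powr (-a))" for y
  proof (cases "y \<in> {0<..<t}")
    case False
    hence "indicator {0<..<t} y = (0::real)" by simp
    moreover have "0 \<le> A * (indicator {0..t} y * y powr s)" "0 \<le> B * (indicator {0<..<t} y * (t-y) powr (-a))"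
      using A by auto
    ultimately show ?thesis by simp
  next
    case True
    hence y: "0 < y" "y < t" by auto
    have i1: "indicator {0<..<t} y = (1::real)" "indicator {0..t} y = (1::real)" using y by auto
    show ?thesis
    proof (cases "y \<le> t/2")
      case True
      have "(t-y) powr (-a) \<le> (t/2) powr (-a)" using True y a1 t by (intro powr_mono2') auto
      hence "(t-y) powr (-a) * y powr s \<le> A * y powr s" unfolding A_def by (intro mult_right_mono) auto
      moreover have "0 \<le> B * (t-y) powr (-a)" using A by simp
      ultimately show ?thesis unfolding i1 by simp
    next
      case False
      have "y powr s \<le> (t/2) powr s" using False y s2 t by (intro powr_mono2') auto
      hence "(t-y) powr (-a) * y powr s \<le> (t-y) powr (-a) * B" unfolding B_def
        by (intro mult_left_mono) auto
      hence "(t-y) powr (-a) * y powr s \<le> B * (t-y) powr (-a)" by (simp only: mult.commute)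
      moreover have "0 \<le> A * y powr s" using A by simp
      ultimately show ?thesis unfolding i1 by simp
    qed
  qed
  have "(\<integral>\<^sup>+ y. ennreal (indicator {0<..<t} y * ((t-y) powr (-a) * y powr s)) \<partial>lborel)
     \<le> (\<integral>\<^sup>+ y. ennreal A * ennreal (indicator {0..t} y * y powr s) + ennreal B * ennreal (indicator {0<..<t} y * (t-y) powr (-a)) \<partial>lborel)"
    apply (intro nn_integral_mono)
    apply (subst ennreal_mult'[symmetric], simp add: A)+
    apply (subst ennreal_plus[symmetric])
    using A apply (simp_all add: indicator_def)[2]
    using pt by (intro ennreal_leI) (simp add: indicator_def)
  also have "\<dots> = ennreal A * (\<integral>\<^sup>+ y. ennreal (indicator {0..t} y * y powr s) \<partial>lborel)
       + ennreal B * (\<integral>\<^sup>+ y. ennreal (indicator {0<..<t} y * (t-y) powr (-a)) \<partial>lborel)"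
    by (simp add: nn_integral_add nn_integral_cmult)
  also have "(\<integral>\<^sup>+ y. ennreal (indicator {0..t} y * y powr s) \<partial>lborel) = ennreal (t powr (s+1)/(s+1))"
    using nn_pow_0c[of s t] s1 t by simp
  also have "(\<integral>\<^sup>+ y. ennreal (indicator {0<..<t} y * (t-y) powr (-a)) \<partial>lborel)
      \<le> ennreal (t powr (-a+1)/(-a+1))"
  proof -
    have "(\<integral>\<^sup>+ y. ennreal (indicator {0<..<t} y * (t-y) powr (-a)) \<partial>lborel)
        = (\<integral>\<^sup>+ x. ennreal (indicator {0<..<t} (t + (-1)*x) * (t-(t + (-1)*x)) powr (-a)) \<partial>lborel)"
      using nn_integral_real_affine[of "\<lambda>y. ennreal (indicator {0<..<t} y * (t-y) powr (-a))" "-1" t]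
      by simp
    also have "\<dots> \<le> (\<integral>\<^sup>+ x. ennreal (indicator {0..t} x * x powr (-a)) \<partial>lborel)"
      by (intro nn_integral_mono ennreal_leI) (auto simp: indicator_def)
    also have "\<dots> = ennreal (t powr (-a+1)/(-a+1))"
      using nn_pow_0c[of "-a" t] a2 t by simp
    finally show ?thesis .
  qed
  finally have 1: "(\<integral>\<^sup>+ y. ennreal (indicator {0<..<t} y * ((t-y) powr (-a) * y powr s)) \<partial>lborel)
      \<le> ennreal A * ennreal (t powr (s+1)/(s+1)) + ennreal B * ennreal (t powr (-a+1)/(-a+1))"
    by (simp add: add_left_mono mult_left_mono)
  also have "\<dots> = ennreal (A * (t powr (s+1)/(s+1)) + B * (t powr (-a+1)/(-a+1)))"
  proof -
    have n1: "t powr (s+1)/(s+1) \<ge> 0" "t powr (-a+1)/(-a+1) \<ge> 0" using s1 a2 by auto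
    have e1: "ennreal A * ennreal (t powr (s+1)/(s+1)) = ennreal (A * (t powr (s+1)/(s+1)))"
      using A n1 by (intro ennreal_mult[symmetric]) auto
    have e2: "ennreal B * ennreal (t powr (-a+1)/(-a+1)) = ennreal (B * (t powr (-a+1)/(-a+1)))"
      using A n1 by (intro ennreal_mult[symmetric]) auto
    show ?thesis unfolding e1 e2 using A n1 by (intro ennreal_plus[symmetric] mult_nonneg_nonneg) auto
  qed
  also have "A * (t powr (s+1)/(s+1)) + B * (t powr (-a+1)/(-a+1)) = (2 powr a/(1+s) + 2 powr (-s)/(1-a)) * t powr (1-a+s)"
  proof -
    have "A * t powr (s+1) = 2 powr a * t powr (1-a+s)"
      unfolding A_def using t by (simp add: half_powr powr_add[symmetric] algebra_simps)
    moreover have "B * t powr (-a+1) = 2 powr (-s) * t powr (1-a+s)"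
      unfolding B_def using t by (simp add: half_powr powr_add[symmetric] algebra_simps)
    ultimately show ?thesis by (simp add: field_simps)
  qed
  finally show ?thesis .
qed


definition CG :: "real \<Rightarrow> real \<Rightarrow> real" where
  "CG \<sigma> \<eta> = 2 * (1/(3+2*\<sigma>) + 2/(\<eta>\<^sup>2*(1-2*\<sigma>)))"
definition BJ :: "real \<Rightarrow> real \<Rightarrow> real" where
  "BJ \<sigma> s = 2 powr (3/4+\<sigma>/2)/(1+s) + 2 powr (-s)/(1-(3/4+\<sigma>/2))"

lemma powr_half_cancel: "0 < (x::real) \<Longrightarrow> x powr (-c/2) * x powr (c/2) = 1"
  by (simp add: powr_add[symmetric])

lemma powr_half_sq: "0 < (x::real) \<Longrightarrow> x powr (c/2) * x powr (c/2) = x powr c"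
  by (simp add: powr_add[symmetric])

lemma exp_psym_bound:
  assumes "\<eta> > 0" "\<tau> > 0" "\<tau> \<le> t"
  shows "exp (-(2*\<tau>*psym \<eta> \<xi>)) \<le> exp (\<eta>*t) * exp (-(\<eta>*\<xi>\<^sup>2*\<tau>))"
proof -
  have "2*\<bar>\<xi>\<bar> \<le> \<xi>\<^sup>2 + 1" using sum_squares_ge_zero[of "\<bar>\<xi>\<bar>-1" 0]
    by (simp add: power2_eq_square algebra_simps)
  hence h: "\<eta>*\<tau>*(2*\<bar>\<xi>\<bar>) \<le> \<eta>*\<tau>*(\<xi>\<^sup>2 + 1)" using assms by (intro mult_left_mono) auto
  have h2: "\<eta>*\<tau> \<le> \<eta>*t" using assms by simp
  have "-(2*\<tau>*psym \<eta> \<xi>) = -(2*\<eta>*\<tau>*\<xi>\<^sup>2) + \<eta>*\<tau>*(2*\<bar>\<xi>\<bar>)"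
    unfolding psym_def by (simp add: algebra_simps)
  also have "\<dots> \<le> -(2*\<eta>*\<tau>*\<xi>\<^sup>2) + \<eta>*\<tau>*(\<xi>\<^sup>2 + 1)" using h by simp
  also have "\<dots> = \<eta>*\<tau> + (-(\<eta>*\<xi>\<^sup>2*\<tau>))" by (simp add: algebra_simps)
  also have "\<dots> \<le> \<eta>*t + (-(\<eta>*\<xi>\<^sup>2*\<tau>))" using h2 by simp
  finally have "exp (-(2*\<tau>*psym \<eta> \<xi>)) \<le> exp (\<eta>*t + (-(\<eta>*\<xi>\<^sup>2*\<tau>)))" by simp
  thus ?thesis by (simp only: exp_add)
qed


lemma main_est:
  fixes \<sigma> s \<eta> t X :: real and D :: "real \<Rightarrow> complex"
  assumes \<sigma>1: "-1/2 < \<sigma>" and \<sigma>2: "\<sigma> \<le> 0" and s1: "-1/2 < s" and s2: "s < 0"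
    and eta: "\<eta> > 0" and t: "0 < t" and X: "0 \<le> X"
    and bnd: "\<And>\<xi>. ennreal (cmod (D \<xi>)) \<le> (\<integral>\<^sup>+ y. ennreal (indicator {0<..<t} y *
                 (exp (-((t-y)*psym \<eta> \<xi>)) * \<bar>\<xi>\<bar> * (y powr s * X))) \<partial>lborel)"
  shows "Hs_sq \<sigma> D \<le> ennreal ((BJ \<sigma> s * t powr (1/4-\<sigma>/2+s)) * (CG \<sigma> \<eta> * exp (\<eta>*t) * X\<^sup>2) * (BJ \<sigma> s * t powr (1/4-\<sigma>/2+s)))"
proof -
  define a where "a = 3/4 + \<sigma>/2"
  have a: "0 < a" "a < 1" "a - 3/2 - \<sigma> = -a" "1-a+s = 1/4-\<sigma>/2+s" using \<sigma>1 \<sigma>2 unfolding a_def by auto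
  define J where "J = (\<integral>\<^sup>+ y. ennreal (indicator {0<..<t} y * ((t-y) powr (-a) * y powr s)) \<partial>lborel)"
  have Jb: "J \<le> ennreal (BJ \<sigma> s * t powr (1/4-\<sigma>/2+s))"
    using J_bound[of t a s] t a s1 s2 unfolding J_def BJ_def a_def by simp
  define F where "F \<xi> y = indicator {0<..<t} y * (exp (-(2*(t-y)*psym \<eta> \<xi>)) * \<xi>\<^sup>2 * ((t-y) powr a * y powr s) * X\<^sup>2)" for \<xi> y
  have Fnn: "F \<xi> y \<ge> 0" for \<xi> y unfolding F_def by (auto simp: indicator_def)
  have [measurable]: "case_prod F \<in> borel_measurable (lborel \<Otimes>\<^sub>M lborel)"
    unfolding F_def psym_def by measurable
  have step1: "(ennreal (cmod (D \<xi>)))\<^sup>2 \<le> J * (\<integral>\<^sup>+ y. ennreal (F \<xi> y) \<partial>lborel)" for \<xi>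
  proof -
    define f where "f y = ennreal (indicator {0<..<t} y * ((t-y) powr (-a/2) * y powr (s/2)))" for y
    define g where "g y = ennreal (indicator {0<..<t} y * (exp (-((t-y)*psym \<eta> \<xi>)) * \<bar>\<xi>\<bar> * ((t-y) powr (a/2) * y powr (s/2)) * X))" for y
    have [measurable]: "f \<in> borel_measurable lborel"
      unfolding f_def by measurable
    have [measurable]: "g \<in> borel_measurable lborel"
      unfolding g_def psym_def by measurable
    have fg: "ennreal (indicator {0<..<t} y * (exp (-((t-y)*psym \<eta> \<xi>)) * \<bar>\<xi>\<bar> * (y powr s * X))) = f y * g y" for y
    proof (cases "y \<in> {0<..<t}")
      case False thus ?thesis unfolding f_def g_def by simp
    next
      case True
      hence y: "0 < y" "0 < t - y" by auto
      have "(t-y) powr (-a/2) * y powr (s/2) * (exp (-((t-y)*psym \<eta> \<xi>)) * \<bar>\<xi>\<bar> * ((t-y) powr (a/2) * y powr (s/2)) * X)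
          = ((t-y) powr (-a/2) * (t-y) powr (a/2)) * (y powr (s/2) * y powr (s/2)) * (exp (-((t-y)*psym \<eta> \<xi>)) * \<bar>\<xi>\<bar> * X)"
        by (simp add: algebra_simps)
      also have "\<dots> = exp (-((t-y)*psym \<eta> \<xi>)) * \<bar>\<xi>\<bar> * (y powr s * X)"
        using powr_half_cancel[OF y(2), of a] powr_half_sq[OF y(1), of s] by simp
      finally have c: "(t-y) powr (-a/2) * y powr (s/2) * (exp (-((t-y)*psym \<eta> \<xi>)) * \<bar>\<xi>\<bar> * ((t-y) powr (a/2) * y powr (s/2)) * X)
          = exp (-((t-y)*psym \<eta> \<xi>)) * \<bar>\<xi>\<bar> * (y powr s * X)" .
      have i: "indicator {0<..<t} y = (1::real)" using True by simp
      have A0: "0 \<le> (t-y) powr (-a/2) * y powr (s/2)" by simp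
      have B0: "0 \<le> exp (-((t-y)*psym \<eta> \<xi>)) * \<bar>\<xi>\<bar> * ((t-y) powr (a/2) * y powr (s/2)) * X" using X by simp
      show ?thesis unfolding f_def g_def i mult_1 c[symmetric] by (rule ennreal_mult[OF A0 B0])
    qed
    have f2: "f y ^ 2 = ennreal (indicator {0<..<t} y * ((t-y) powr (-a) * y powr s))" for y
    proof (cases "y \<in> {0<..<t}")
      case False thus ?thesis unfolding f_def by (simp add: power2_eq_square)
    next
      case True
      hence y: "0 < y" "0 < t - y" by auto
      have "((t-y) powr (-a/2) * y powr (s/2))\<^sup>2 = ((t-y) powr (-a/2) * (t-y) powr (-a/2)) * (y powr (s/2) * y powr (s/2))"
        by (simp add: power2_eq_square algebra_simps)
      also have "\<dots> = (t-y) powr (-a) * y powr s"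
        using powr_half_sq[OF y(2), of "-a"] powr_half_sq[OF y(1), of s] by simp
      finally have c: "((t-y) powr (-a/2) * y powr (s/2))\<^sup>2 = (t-y) powr (-a) * y powr s" .
      have i: "indicator {0<..<t} y = (1::real)" using True by simp
      show ?thesis unfolding f_def i mult_1 c[symmetric] by (rule ennreal_power) simp
    qed
    have g2: "g y ^ 2 = ennreal (F \<xi> y)" for y
    proof (cases "y \<in> {0<..<t}")
      case False thus ?thesis unfolding g_def F_def by (simp add: power2_eq_square)
    next
      case True
      hence y: "0 < y" "0 < t - y" by auto
      have "(exp (-((t-y)*psym \<eta> \<xi>)) * \<bar>\<xi>\<bar> * ((t-y) powr (a/2) * y powr (s/2)) * X)\<^sup>2
         = (exp (-((t-y)*psym \<eta> \<xi>)))\<^sup>2 * \<xi>\<^sup>2 * (((t-y) powr (a/2) * (t-y) powr (a/2)) * (y powr (s/2) * y powr (s/2))) * X\<^sup>2"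
        by (simp add: power2_eq_square algebra_simps)
      also have "\<dots> = exp (-(2*(t-y)*psym \<eta> \<xi>)) * \<xi>\<^sup>2 * ((t-y) powr a * y powr s) * X\<^sup>2"
        using powr_half_sq[OF y(2), of a] powr_half_sq[OF y(1), of s]
      proof -
        have "(exp (-((t-y)*psym \<eta> \<xi>)))\<^sup>2 = exp (-(2*(t-y)*psym \<eta> \<xi>))"
          unfolding power2_eq_square exp_add[symmetric] by simp
        thus ?thesis using powr_half_sq[OF y(2), of a] powr_half_sq[OF y(1), of s] by simp
      qed
      finally have c: "(exp (-((t-y)*psym \<eta> \<xi>)) * \<bar>\<xi>\<bar> * ((t-y) powr (a/2) * y powr (s/2)) * X)\<^sup>2
          = exp (-(2*(t-y)*psym \<eta> \<xi>)) * \<xi>\<^sup>2 * ((t-y) powr a * y powr s) * X\<^sup>2" .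
      have i: "indicator {0<..<t} y = (1::real)" using True by simp
      show ?thesis unfolding g_def F_def i mult_1 c[symmetric] by (rule ennreal_power) (simp add: X)
    qed
    have "(ennreal (cmod (D \<xi>)))\<^sup>2 \<le> (\<integral>\<^sup>+ y. f y * g y \<partial>lborel)\<^sup>2"
      using bnd[of \<xi>] unfolding fg by (simp add: power_mono)
    also have "\<dots> \<le> (\<integral>\<^sup>+ y. f y ^ 2 \<partial>lborel) * (\<integral>\<^sup>+ y. g y ^ 2 \<partial>lborel)"
      by (rule Cauchy_Schwarz_nn_integral) auto
    also have "\<dots> = J * (\<integral>\<^sup>+ y. ennreal (F \<xi> y) \<partial>lborel)"
      unfolding f2 g2 J_def ..
    finally show ?thesis .
  qed
  define w where "w \<xi> = (1+\<xi>\<^sup>2) powr \<sigma>" for \<xi> :: real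
  have w0: "w \<xi> \<ge> 0" for \<xi> unfolding w_def by simp
  define C1 where "C1 = CG \<sigma> \<eta> * exp (\<eta>*t) * X\<^sup>2"
  have C1: "C1 \<ge> 0" unfolding C1_def CG_def using \<sigma>1 \<sigma>2 eta by (intro mult_nonneg_nonneg) auto
  have [measurable]: "w \<in> borel_measurable borel" unfolding w_def by measurable
  have step2: "Hs_sq \<sigma> D \<le> (\<integral>\<^sup>+ \<xi>. J * (\<integral>\<^sup>+ y. ennreal (w \<xi> * F \<xi> y) \<partial>lborel) \<partial>lborel)"
    unfolding Hs_sq_def
  proof (intro nn_integral_mono)
    fix \<xi> :: real
    have "ennreal ((1 + \<xi>\<^sup>2) powr \<sigma> * (cmod (D \<xi>))\<^sup>2) = ennreal (w \<xi>) * (ennreal (cmod (D \<xi>)))\<^sup>2"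
      unfolding w_def by (simp add: ennreal_mult ennreal_power)
    also have "\<dots> \<le> ennreal (w \<xi>) * (J * (\<integral>\<^sup>+ y. ennreal (F \<xi> y) \<partial>lborel))"
      by (intro mult_left_mono step1) auto
    also have "\<dots> = J * (ennreal (w \<xi>) * (\<integral>\<^sup>+ y. ennreal (F \<xi> y) \<partial>lborel))"
      by (simp add: ac_simps)
    also have "ennreal (w \<xi>) * (\<integral>\<^sup>+ y. ennreal (F \<xi> y) \<partial>lborel) = (\<integral>\<^sup>+ y. ennreal (w \<xi>) * ennreal (F \<xi> y) \<partial>lborel)"
      by (rule nn_integral_cmult[symmetric]) (unfold F_def psym_def, measurable)
    also have "\<dots> = (\<integral>\<^sup>+ y. ennreal (w \<xi> * F \<xi> y) \<partial>lborel)"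
      using w0 Fnn by (simp add: ennreal_mult)
    finally show "ennreal ((1 + \<xi>\<^sup>2) powr \<sigma> * (cmod (D \<xi>))\<^sup>2) \<le> J * (\<integral>\<^sup>+ y. ennreal (w \<xi> * F \<xi> y) \<partial>lborel)" .
  qed
  have meas2: "case_prod (\<lambda>\<xi> y. ennreal (w \<xi> * F \<xi> y)) \<in> borel_measurable (lborel \<Otimes>\<^sub>M lborel)"
    unfolding F_def psym_def w_def by measurable
  have step3: "(\<integral>\<^sup>+ \<xi>. J * (\<integral>\<^sup>+ y. ennreal (w \<xi> * F \<xi> y) \<partial>lborel) \<partial>lborel)
       = J * (\<integral>\<^sup>+ y. (\<integral>\<^sup>+ \<xi>. ennreal (w \<xi> * F \<xi> y) \<partial>lborel) \<partial>lborel)"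
  proof -
    have "(\<integral>\<^sup>+ \<xi>. J * (\<integral>\<^sup>+ y. ennreal (w \<xi> * F \<xi> y) \<partial>lborel) \<partial>lborel)
        = J * (\<integral>\<^sup>+ \<xi>. (\<integral>\<^sup>+ y. ennreal (w \<xi> * F \<xi> y) \<partial>lborel) \<partial>lborel)"
      by (rule nn_integral_cmult) (unfold F_def psym_def w_def, measurable)
    also have "(\<integral>\<^sup>+ \<xi>. (\<integral>\<^sup>+ y. ennreal (w \<xi> * F \<xi> y) \<partial>lborel) \<partial>lborel)
        = (\<integral>\<^sup>+ y. (\<integral>\<^sup>+ \<xi>. ennreal (w \<xi> * F \<xi> y) \<partial>lborel) \<partial>lborel)"
      by (rule lborel_pair.Fubini'[symmetric, OF meas2])
    finally show ?thesis .
  qed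
  have step4: "(\<integral>\<^sup>+ \<xi>. ennreal (w \<xi> * F \<xi> y) \<partial>lborel)
      \<le> ennreal C1 * ennreal (indicator {0<..<t} y * ((t-y) powr (-a) * y powr s))" for y
  proof (cases "y \<in> {0<..<t}")
    case False thus ?thesis unfolding F_def by simp
  next
    case True
    define \<tau> where "\<tau> = t - y"
    have y: "0 < y" "0 < \<tau>" "\<tau> \<le> t" using True unfolding \<tau>_def by auto
    define c0 where "c0 = \<tau> powr a * y powr s * X\<^sup>2 * exp (\<eta>*t)"
    have c0: "c0 \<ge> 0" unfolding c0_def by simp
    have pt: "w \<xi> * F \<xi> y \<le> c0 * ((1+\<xi>\<^sup>2) powr \<sigma> * \<xi>\<^sup>2 * exp (-(\<eta>*\<xi>\<^sup>2*\<tau>)))" for \<xi>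
    proof -
      have i: "indicator {0<..<t} y = (1::real)" using True by simp
      have e: "exp (-(2*\<tau>*psym \<eta> \<xi>)) \<le> exp (\<eta>*t) * exp (-(\<eta>*\<xi>\<^sup>2*\<tau>))"
        by (rule exp_psym_bound[OF eta y(2,3)])
      have "w \<xi> * F \<xi> y = (w \<xi> * \<xi>\<^sup>2 * (\<tau> powr a * y powr s) * X\<^sup>2) * exp (-(2*\<tau>*psym \<eta> \<xi>))"
        unfolding F_def i \<tau>_def by (simp add: ac_simps)
      also have "\<dots> \<le> (w \<xi> * \<xi>\<^sup>2 * (\<tau> powr a * y powr s) * X\<^sup>2) * (exp (\<eta>*t) * exp (-(\<eta>*\<xi>\<^sup>2*\<tau>)))"
        using w0 by (intro mult_left_mono e) auto
      also have "\<dots> = c0 * ((1+\<xi>\<^sup>2) powr \<sigma> * \<xi>\<^sup>2 * exp (-(\<eta>*\<xi>\<^sup>2*\<tau>)))"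
        unfolding c0_def w_def by (simp add: ac_simps)
      finally show ?thesis .
    qed
    have "(\<integral>\<^sup>+ \<xi>. ennreal (w \<xi> * F \<xi> y) \<partial>lborel)
        \<le> (\<integral>\<^sup>+ \<xi>. ennreal c0 * ennreal ((1+\<xi>\<^sup>2) powr \<sigma> * \<xi>\<^sup>2 * exp (-(\<eta>*\<xi>\<^sup>2*\<tau>))) \<partial>lborel)"
    proof (intro nn_integral_mono)
      fix \<xi> :: real
      have "ennreal (w \<xi> * F \<xi> y) \<le> ennreal (c0 * ((1+\<xi>\<^sup>2) powr \<sigma> * \<xi>\<^sup>2 * exp (-(\<eta>*\<xi>\<^sup>2*\<tau>))))"
        by (rule ennreal_leI[OF pt])
      also have "\<dots> = ennreal c0 * ennreal ((1+\<xi>\<^sup>2) powr \<sigma> * \<xi>\<^sup>2 * exp (-(\<eta>*\<xi>\<^sup>2*\<tau>)))"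
        using c0 by (rule ennreal_mult') 
      finally show "ennreal (w \<xi> * F \<xi> y) \<le> ennreal c0 * ennreal ((1+\<xi>\<^sup>2) powr \<sigma> * \<xi>\<^sup>2 * exp (-(\<eta>*\<xi>\<^sup>2*\<tau>)))" .
    qed
    also have "\<dots> = ennreal c0 * (\<integral>\<^sup>+ \<xi>. ennreal ((1+\<xi>\<^sup>2) powr \<sigma> * \<xi>\<^sup>2 * exp (-(\<eta>*\<xi>\<^sup>2*\<tau>))) \<partial>lborel)"
      by (rule nn_integral_cmult) measurable
    also have "\<dots> \<le> ennreal c0 * ennreal (CG \<sigma> \<eta> * \<tau> powr (-3/2-\<sigma>))"
      using G_bound[OF \<sigma>1 \<sigma>2 eta y(2)] unfolding CG_def by (intro mult_left_mono) auto
    also have "\<dots> = ennreal (c0 * (CG \<sigma> \<eta> * \<tau> powr (-3/2-\<sigma>)))"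
      using c0 by (rule ennreal_mult'[symmetric])
    also have "c0 * (CG \<sigma> \<eta> * \<tau> powr (-3/2-\<sigma>)) = C1 * (indicator {0<..<t} y * ((t-y) powr (-a) * y powr s))"
    proof -
      have "\<tau> powr a * \<tau> powr (-3/2-\<sigma>) = \<tau> powr (-a)"
      proof -
        have e: "a + (-3/2-\<sigma>) = -a" using a(3) by simp
        show ?thesis by (subst e[symmetric], rule powr_add[symmetric])
      qed
      thus ?thesis using True unfolding c0_def C1_def \<tau>_def by (simp add: ac_simps)
    qed
    also have "ennreal (C1 * (indicator {0<..<t} y * ((t-y) powr (-a) * y powr s))) = ennreal C1 * ennreal (indicator {0<..<t} y * ((t-y) powr (-a) * y powr s))"
      using C1 by (rule ennreal_mult')
    finally show ?thesis .
  qed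
  have "Hs_sq \<sigma> D \<le> J * (\<integral>\<^sup>+ y. (\<integral>\<^sup>+ \<xi>. ennreal (w \<xi> * F \<xi> y) \<partial>lborel) \<partial>lborel)"
    using step2 step3 by simp
  also have "\<dots> \<le> J * (\<integral>\<^sup>+ y. ennreal C1 * ennreal (indicator {0<..<t} y * ((t-y) powr (-a) * y powr s)) \<partial>lborel)"
    by (intro mult_left_mono nn_integral_mono step4) auto
  also have "(\<integral>\<^sup>+ y. ennreal C1 * ennreal (indicator {0<..<t} y * ((t-y) powr (-a) * y powr s)) \<partial>lborel) = ennreal C1 * J"
    unfolding J_def by (rule nn_integral_cmult) measurable
  also have "J * (ennreal C1 * J) \<le> ennreal (BJ \<sigma> s * t powr (1/4-\<sigma>/2+s)) * (ennreal C1 * ennreal (BJ \<sigma> s * t powr (1/4-\<sigma>/2+s)))"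
    by (intro mult_mono Jb) auto
  also have "\<dots> = ennreal ((BJ \<sigma> s * t powr (1/4-\<sigma>/2+s)) * C1 * (BJ \<sigma> s * t powr (1/4-\<sigma>/2+s)))"
  proof -
    have B0: "BJ \<sigma> s * t powr (1/4-\<sigma>/2+s) \<ge> 0" unfolding BJ_def using s1 \<sigma>1 \<sigma>2 by (intro mult_nonneg_nonneg add_nonneg_nonneg) auto
    define B where "B = BJ \<sigma> s * t powr (1/4-\<sigma>/2+s)"
    have "ennreal (B * C1 * B) = ennreal B * (ennreal C1 * ennreal B)"
      using B0 C1 unfolding B_def[symmetric] by (simp only: ennreal_mult mult_nonneg_nonneg mult.assoc)
    thus ?thesis unfolding B_def by (rule sym)
  qed
  finally show ?thesis unfolding C1_def .
qed


lemma duhamel_ptwise: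
  assumes s2: "s < 0" and u: "in_X s T u" and v: "in_X s T v" and t: "0 < t" "t \<le> T"
  shows "ennreal (cmod (duhamel \<beta> \<eta> u v t \<xi>)) \<le> (\<integral>\<^sup>+ y. ennreal (indicator {0<..<t} y *
                 (exp (-((t-y)*psym \<eta> \<xi>)) * \<bar>\<xi>\<bar> * (y powr s * (X_norm s T u * X_norm s T v)))) \<partial>lborel)"
proof -
  define \<Phi> where "\<Phi> y = exp (complex_of_real (t - y) * (\<i> * complex_of_real (qsym \<beta> \<xi>) - complex_of_real (psym \<eta> \<xi>)))
             * (\<i> * complex_of_real \<xi>) * fconv (u y) (v y) \<xi>" for y
  have "duhamel \<beta> \<eta> u v t \<xi> = (\<integral>y. indicator {0..t} y *\<^sub>R \<Phi> y \<partial>lborel)"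
    unfolding duhamel_def \<Phi>_def set_lebesgue_integral_def ..
  hence "ennreal (cmod (duhamel \<beta> \<eta> u v t \<xi>)) \<le> (\<integral>\<^sup>+ y. ennreal (norm (indicator {0..t} y *\<^sub>R \<Phi> y)) \<partial>lborel)"
    using norm_integral_le_nn by metis
  also have "\<dots> \<le> (\<integral>\<^sup>+ y. ennreal (indicator {0<..<t} y *
                 (exp (-((t-y)*psym \<eta> \<xi>)) * \<bar>\<xi>\<bar> * (y powr s * (X_norm s T u * X_norm s T v)))) \<partial>lborel)"
  proof (rule nn_integral_mono_AE)
    have "AE y in lborel. y \<noteq> 0" "AE y in lborel. y \<noteq> t" by (rule AE_lborel_singleton)+
    thus "AE y in lborel. ennreal (norm (indicator {0..t} y *\<^sub>R \<Phi> y)) \<le> ennreal (indicator {0<..<t} y *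
                 (exp (-((t-y)*psym \<eta> \<xi>)) * \<bar>\<xi>\<bar> * (y powr s * (X_norm s T u * X_norm s T v))))"
    proof eventually_elim
      case (elim y)
      show ?case
      proof (cases "y \<in> {0<..<t}")
        case False
        hence "y \<notin> {0..t}" using elim by auto
        thus ?thesis by simp
      next
        case True
        hence y: "y \<in> {0<..T}" using t by auto
        have Lu: "L2_norm (u y) \<le> y powr (s/2) * X_norm s T u" by (rule L2_from_X[OF u y s2])
        have Lv: "L2_norm (v y) \<le> y powr (s/2) * X_norm s T v" by (rule L2_from_X[OF v y s2])
        have uL: "in_L2 (u y)" "in_L2 (v y)" using u v y unfolding in_X_def by auto
        have "cmod (fconv (u y) (v y) \<xi>) \<le> L2_norm (u y) * L2_norm (v y)" by (rule fconv_bound[OF uL])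
        also have "\<dots> \<le> (y powr (s/2) * X_norm s T u) * (y powr (s/2) * X_norm s T v)"
          using Lu Lv Hs_norm_nonneg[of 0 "u y"] Hs_norm_nonneg[of 0 "v y"] by (intro mult_mono) auto
        also have "\<dots> = y powr s * (X_norm s T u * X_norm s T v)"
          using True powr_half_sq[of y s] by (simp add: ac_simps)
        finally have fc: "cmod (fconv (u y) (v y) \<xi>) \<le> y powr s * (X_norm s T u * X_norm s T v)" .
        have "norm (indicator {0..t} y *\<^sub>R \<Phi> y) = cmod (\<Phi> y)" using True by simp
        also have "\<dots> = exp (-((t-y)*psym \<eta> \<xi>)) * \<bar>\<xi>\<bar> * cmod (fconv (u y) (v y) \<xi>)"
          unfolding \<Phi>_def by (simp add: norm_mult)
        also have "\<dots> \<le> exp (-((t-y)*psym \<eta> \<xi>)) * \<bar>\<xi>\<bar> * (y powr s * (X_norm s T u * X_norm s T v))"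
          by (intro mult_left_mono fc) auto
        finally show ?thesis using True by (intro ennreal_leI) simp
      qed
    qed
  qed
  finally show ?thesis .
qed


definition tr :: "nat \<Rightarrow> (real \<Rightarrow> complex) \<Rightarrow> real \<Rightarrow> complex" where
  "tr n f x = (if \<bar>x\<bar> \<le> real n then f x else 0)"

lemma tr_meas[measurable]:
  assumes [measurable]: "f \<in> borel_measurable borel" shows "tr n f \<in> borel_measurable borel"
  unfolding tr_def by measurable

lemma tr_diff: "tr n (f - g) = tr n f - tr n g"
  by (auto simp: tr_def fun_eq_iff)

lemma conv_meas:
  assumes [measurable]: "f \<in> borel_measurable borel" "g \<in> borel_measurable borel"
  shows "(\<lambda>\<xi>. fconv f g \<xi>) \<in> borel_measurable borel"
  unfolding fconv_def by measurable

lemma CS_conv_fin: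
  fixes f g :: "real \<Rightarrow> complex"
  assumes [measurable]: "f \<in> borel_measurable borel" "g \<in> borel_measurable borel"
    and F: "Hs_sq 0 f < \<infinity>" and G: "Hs_sq 0 g < \<infinity>"
  shows "(\<integral>\<^sup>+\<zeta>. ennreal (cmod (f (\<xi>-\<zeta>) * g \<zeta>)) \<partial>lborel) < \<infinity>"
proof -
  let ?I = "\<integral>\<^sup>+\<zeta>. ennreal (cmod (f (\<xi>-\<zeta>)) * cmod (g \<zeta>)) \<partial>lborel"
  have "?I ^ 2 \<le> Hs_sq 0 f * Hs_sq 0 g" unfolding Hs_sq_0 by (rule CS_translate) auto
  also have "\<dots> < \<infinity>" using F G by (simp add: ennreal_mult_less_top)
  finally have "?I ^ 2 < \<infinity>" .
  hence "?I < \<infinity>" by (simp add: power_less_top_ennreal)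
  thus ?thesis by (simp add: norm_mult)
qed

lemma conv_integrable:
  fixes f g :: "real \<Rightarrow> complex"
  assumes [measurable]: "f \<in> borel_measurable borel" "g \<in> borel_measurable borel"
    and F: "Hs_sq 0 f < \<infinity>" and G: "Hs_sq 0 g < \<infinity>"
  shows "integrable lborel (\<lambda>\<zeta>. f (\<xi>-\<zeta>) * g \<zeta>)"
  by (rule integrableI_bounded) (use CS_conv_fin[OF assms] in auto)

lemma Hs_sq_diff_fin:
  fixes f g :: "real \<Rightarrow> complex"
  assumes [measurable]: "f \<in> borel_measurable borel" "g \<in> borel_measurable borel"
    and F: "Hs_sq s f < \<infinity>" and G: "Hs_sq s g < \<infinity>"
  shows "Hs_sq s (f - g) < \<infinity>"
proof -
  have pt: "(1 + x\<^sup>2) powr s * (cmod ((f - g) x))\<^sup>2 \<le> 2 * ((1 + x\<^sup>2) powr s * (cmod (f x))\<^sup>2) + 2 * ((1 + x\<^sup>2) powr s * (cmod (g x))\<^sup>2)" for x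
  proof -
    have "(cmod (f x - g x))\<^sup>2 \<le> (cmod (f x) + cmod (g x))\<^sup>2"
      by (intro power_mono norm_triangle_ineq4) auto
    also have "\<dots> \<le> 2 * (cmod (f x))\<^sup>2 + 2 * (cmod (g x))\<^sup>2"
      using sum_squares_ge_zero[of "cmod (f x) - cmod (g x)" 0] by (simp add: power2_eq_square algebra_simps)
    finally have "(cmod (f x - g x))\<^sup>2 \<le> 2 * (cmod (f x))\<^sup>2 + 2 * (cmod (g x))\<^sup>2" .
    hence "(1 + x\<^sup>2) powr s * (cmod (f x - g x))\<^sup>2 \<le> (1 + x\<^sup>2) powr s * (2 * (cmod (f x))\<^sup>2 + 2 * (cmod (g x))\<^sup>2)"
      by (intro mult_left_mono) auto
    thus ?thesis by (simp add: algebra_simps)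
  qed
  have "Hs_sq s (f - g) \<le> (\<integral>\<^sup>+ x. ennreal 2 * ennreal ((1 + x\<^sup>2) powr s * (cmod (f x))\<^sup>2) + ennreal 2 * ennreal ((1 + x\<^sup>2) powr s * (cmod (g x))\<^sup>2) \<partial>lborel)"
    unfolding Hs_sq_def
  proof (intro nn_integral_mono)
    fix x :: real
    have "ennreal ((1 + x\<^sup>2) powr s * (cmod ((f - g) x))\<^sup>2) \<le> ennreal (2 * ((1 + x\<^sup>2) powr s * (cmod (f x))\<^sup>2) + 2 * ((1 + x\<^sup>2) powr s * (cmod (g x))\<^sup>2))"
      by (rule ennreal_leI[OF pt])
    also have "\<dots> = ennreal 2 * ennreal ((1 + x\<^sup>2) powr s * (cmod (f x))\<^sup>2) + ennreal 2 * ennreal ((1 + x\<^sup>2) powr s * (cmod (g x))\<^sup>2)"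
      by (simp add: ennreal_mult)
    finally show "ennreal ((1 + x\<^sup>2) powr s * (cmod ((f - g) x))\<^sup>2) \<le> ennreal 2 * ennreal ((1 + x\<^sup>2) powr s * (cmod (f x))\<^sup>2) + ennreal 2 * ennreal ((1 + x\<^sup>2) powr s * (cmod (g x))\<^sup>2)" .
  qed
  also have "\<dots> = ennreal 2 * Hs_sq s f + ennreal 2 * Hs_sq s g"
    unfolding Hs_sq_def by (simp add: nn_integral_add nn_integral_cmult)
  also have "\<dots> < \<infinity>" using F G by (simp add: ennreal_mult_less_top)
  finally show ?thesis .
qed


lemma tr_sq:
  assumes s: "s \<le> 0" and [measurable]: "f \<in> borel_measurable borel"
  shows "Hs_sq 0 (tr n f) \<le> ennreal ((1 + (real n)\<^sup>2) powr (-s)) * Hs_sq s f"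
proof -
  have pt: "ennreal ((cmod (tr n f x))\<^sup>2) \<le> ennreal ((1 + (real n)\<^sup>2) powr (-s)) * ennreal ((1 + x\<^sup>2) powr s * (cmod (f x))\<^sup>2)" for x
  proof (cases "\<bar>x\<bar> \<le> real n")
    case False thus ?thesis by (simp add: tr_def)
  next
    case True
    have "x\<^sup>2 \<le> (real n)\<^sup>2" using True by (metis abs_le_square_iff abs_of_nat)
    hence "(1 + x\<^sup>2) powr (-s) \<le> (1 + (real n)\<^sup>2) powr (-s)" using s by (intro powr_mono2) auto
    hence "(1 + x\<^sup>2) powr (-s) * ((1 + x\<^sup>2) powr s * (cmod (f x))\<^sup>2) \<le> (1 + (real n)\<^sup>2) powr (-s) * ((1 + x\<^sup>2) powr s * (cmod (f x))\<^sup>2)"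
      by (intro mult_right_mono) auto
    moreover have "(1 + x\<^sup>2) powr (-s) * ((1 + x\<^sup>2) powr s * (cmod (f x))\<^sup>2) = (cmod (f x))\<^sup>2"
    proof -
      have "(1 + x\<^sup>2) powr (-s) * (1 + x\<^sup>2) powr s = 1"
        by (simp add: powr_add[symmetric]) (metis add_pos_nonneg zero_le_power2 zero_less_one less_irrefl)
      thus ?thesis by (simp add: mult.assoc[symmetric])
    qed
    ultimately have "(cmod (f x))\<^sup>2 \<le> (1 + (real n)\<^sup>2) powr (-s) * ((1 + x\<^sup>2) powr s * (cmod (f x))\<^sup>2)" by simp
    hence "ennreal ((cmod (f x))\<^sup>2) \<le> ennreal ((1 + (real n)\<^sup>2) powr (-s) * ((1 + x\<^sup>2) powr s * (cmod (f x))\<^sup>2))"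
      by (rule ennreal_leI)
    also have "\<dots> = ennreal ((1 + (real n)\<^sup>2) powr (-s)) * ennreal ((1 + x\<^sup>2) powr s * (cmod (f x))\<^sup>2)"
      by (simp add: ennreal_mult)
    finally show ?thesis using True by (simp add: tr_def)
  qed
  have "Hs_sq 0 (tr n f) \<le> (\<integral>\<^sup>+ x. ennreal ((1 + (real n)\<^sup>2) powr (-s)) * ennreal ((1 + x\<^sup>2) powr s * (cmod (f x))\<^sup>2) \<partial>lborel)"
    unfolding Hs_sq_0 by (intro nn_integral_mono pt)
  also have "\<dots> = ennreal ((1 + (real n)\<^sup>2) powr (-s)) * Hs_sq s f"
    unfolding Hs_sq_def by (rule nn_integral_cmult) measurable
  finally show ?thesis .
qed

lemma tr_fin: "s \<le> 0 \<Longrightarrow> f \<in> borel_measurable borel \<Longrightarrow> Hs_sq s f < \<infinity> \<Longrightarrow> Hs_sq 0 (tr n f) < \<infinity>"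
  using tr_sq[of s f n] by (simp add: ennreal_mult_less_top le_less_trans)

lemma fconv_sq:
  fixes f g :: "real \<Rightarrow> complex"
  assumes [measurable]: "f \<in> borel_measurable borel" "g \<in> borel_measurable borel"
  shows "(ennreal (cmod (fconv f g \<xi>)))\<^sup>2 \<le> ennreal ((1/(2*pi))\<^sup>2) * (Hs_sq 0 f * Hs_sq 0 g)"
proof -
  let ?I = "\<integral>\<zeta>. f (\<xi> - \<zeta>) * g \<zeta> \<partial>lborel"
  have c: "cmod (fconv f g \<xi>) = (1/(2*pi)) * cmod ?I"
    unfolding fconv_def by (simp add: norm_mult norm_divide pi_ge_zero)
  have "ennreal (cmod ?I) \<le> (\<integral>\<^sup>+\<zeta>. ennreal (cmod (f (\<xi>-\<zeta>) * g \<zeta>)) \<partial>lborel)"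
    using norm_integral_le_nn[of lborel "\<lambda>\<zeta>. f (\<xi> - \<zeta>) * g \<zeta>"] by simp
  also have "\<dots> = (\<integral>\<^sup>+\<zeta>. ennreal (cmod (f (\<xi>-\<zeta>)) * cmod (g \<zeta>)) \<partial>lborel)"
    by (simp add: norm_mult)
  finally have 1: "(ennreal (cmod ?I))\<^sup>2 \<le> (\<integral>\<^sup>+\<zeta>. ennreal (cmod (f (\<xi>-\<zeta>)) * cmod (g \<zeta>)) \<partial>lborel)\<^sup>2"
    by (simp add: power_mono)
  also have "\<dots> \<le> Hs_sq 0 f * Hs_sq 0 g"
    unfolding Hs_sq_0 by (rule CS_translate) auto
  finally have 2: "(ennreal (cmod ?I))\<^sup>2 \<le> Hs_sq 0 f * Hs_sq 0 g" .
  have "(ennreal (cmod (fconv f g \<xi>)))\<^sup>2 = ennreal ((1/(2*pi))\<^sup>2) * (ennreal (cmod ?I))\<^sup>2"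
  proof -
    have "(ennreal ((1/(2*pi)) * cmod ?I))\<^sup>2 = (ennreal (1/(2*pi)) * ennreal (cmod ?I))\<^sup>2"
      by (subst ennreal_mult) (auto simp: pi_ge_zero)
    also have "\<dots> = (ennreal (1/(2*pi)))\<^sup>2 * (ennreal (cmod ?I))\<^sup>2" by (rule power_mult_distrib)
    also have "(ennreal (1/(2*pi)))\<^sup>2 = ennreal ((1/(2*pi))\<^sup>2)" by (rule ennreal_power) (simp add: pi_ge_zero)
    finally show ?thesis unfolding c .
  qed
  also have "\<dots> \<le> ennreal ((1/(2*pi))\<^sup>2) * (Hs_sq 0 f * Hs_sq 0 g)"
    by (intro mult_left_mono 2) auto
  finally show ?thesis .
qed

lemma trunc_bound:
  fixes f g :: "real \<Rightarrow> complex"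
  assumes s: "s \<le> 0" and [measurable]: "f \<in> borel_measurable borel" "g \<in> borel_measurable borel"
    and F: "Hs_sq s f < \<infinity>" and G: "Hs_sq s g < \<infinity>"
  shows "cmod (fconv (tr n f) (tr n g) \<xi>) \<le> (1 + (real n)\<^sup>2) powr (-s) * Hs_norm s f * Hs_norm s g"
proof -
  define N where "N = (1 + (real n)\<^sup>2) powr (-s)"
  have N: "N \<ge> 0" unfolding N_def by simp
  have hf: "Hs_sq s f = ennreal (2*pi*(Hs_norm s f)\<^sup>2)" by (rule Hs_sq_finite_eq[OF F])
  have hg: "Hs_sq s g = ennreal (2*pi*(Hs_norm s g)\<^sup>2)" by (rule Hs_sq_finite_eq[OF G])
  have "(ennreal (cmod (fconv (tr n f) (tr n g) \<xi>)))\<^sup>2 \<le> ennreal ((1/(2*pi))\<^sup>2) * (Hs_sq 0 (tr n f) * Hs_sq 0 (tr n g))"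
    by (rule fconv_sq) auto
  also have "\<dots> \<le> ennreal ((1/(2*pi))\<^sup>2) * ((ennreal N * Hs_sq s f) * (ennreal N * Hs_sq s g))"
    unfolding N_def by (intro mult_left_mono mult_mono tr_sq s) auto
  also have "\<dots> = ennreal ((N * Hs_norm s f * Hs_norm s g)\<^sup>2)"
    unfolding hf hg using N
    by (simp add: ennreal_mult[symmetric] power_mult_distrib pi_ge_zero del: ennreal_mult)
       (simp add: field_simps power2_eq_square)
  finally have "cmod (fconv (tr n f) (tr n g) \<xi>) \<le> sqrt ((N * Hs_norm s f * Hs_norm s g)\<^sup>2)"
    by (rule ennreal_sq_le_imp) auto
  also have "\<dots> = N * Hs_norm s f * Hs_norm s g"
    using N Hs_norm_nonneg[of s f] Hs_norm_nonneg[of s g] by simp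
  finally show ?thesis unfolding N_def .
qed


lemma fconv_bilin:
  fixes f f0 g g0 :: "real \<Rightarrow> complex"
  assumes [measurable]: "f \<in> borel_measurable borel" "f0 \<in> borel_measurable borel" "g \<in> borel_measurable borel" "g0 \<in> borel_measurable borel"
    and fin: "Hs_sq 0 f < \<infinity>" "Hs_sq 0 f0 < \<infinity>" "Hs_sq 0 g < \<infinity>" "Hs_sq 0 g0 < \<infinity>"
  shows "fconv f g \<xi> - fconv f0 g0 \<xi> = fconv (f - f0) (g - g0) \<xi> + fconv (f - f0) g0 \<xi> + fconv f0 (g - g0) \<xi>"
proof -
  have d1: "Hs_sq 0 (f - f0) < \<infinity>" by (rule Hs_sq_diff_fin) (use fin in auto)
  have d2: "Hs_sq 0 (g - g0) < \<infinity>" by (rule Hs_sq_diff_fin) (use fin in auto)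
  have m[measurable]: "(f - f0) \<in> borel_measurable borel" "(g - g0) \<in> borel_measurable borel"
    by (simp_all add: fun_diff_def)
  note I = conv_integrable[where \<xi>=\<xi>]
  have i1: "integrable lborel (\<lambda>\<zeta>. f (\<xi>-\<zeta>) * g \<zeta>)" by (rule I) (use fin in auto)
  have i2: "integrable lborel (\<lambda>\<zeta>. f0 (\<xi>-\<zeta>) * g0 \<zeta>)" by (rule I) (use fin in auto)
  have i3: "integrable lborel (\<lambda>\<zeta>. (f - f0) (\<xi>-\<zeta>) * (g - g0) \<zeta>)" by (rule I[OF m(1) m(2) d1 d2])
  have i4: "integrable lborel (\<lambda>\<zeta>. (f - f0) (\<xi>-\<zeta>) * g0 \<zeta>)" by (rule I[OF m(1) _ d1 fin(4)]) simp
  have i5: "integrable lborel (\<lambda>\<zeta>. f0 (\<xi>-\<zeta>) * (g - g0) \<zeta>)" by (rule I[OF _ m(2) fin(2) d2]) simp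
  have "(\<integral>\<zeta>. f (\<xi>-\<zeta>) * g \<zeta> \<partial>lborel) - (\<integral>\<zeta>. f0 (\<xi>-\<zeta>) * g0 \<zeta> \<partial>lborel)
      = (\<integral>\<zeta>. f (\<xi>-\<zeta>) * g \<zeta> - f0 (\<xi>-\<zeta>) * g0 \<zeta> \<partial>lborel)"
    by (rule Bochner_Integration.integral_diff[OF i1 i2, symmetric])
  also have "\<dots> = (\<integral>\<zeta>. ((f - f0) (\<xi>-\<zeta>) * (g - g0) \<zeta> + (f - f0) (\<xi>-\<zeta>) * g0 \<zeta>) + f0 (\<xi>-\<zeta>) * (g - g0) \<zeta> \<partial>lborel)"
    by (rule Bochner_Integration.integral_cong) (simp_all add: algebra_simps)
  also have "\<dots> = (\<integral>\<zeta>. (f - f0) (\<xi>-\<zeta>) * (g - g0) \<zeta> + (f - f0) (\<xi>-\<zeta>) * g0 \<zeta> \<partial>lborel) + (\<integral>\<zeta>. f0 (\<xi>-\<zeta>) * (g - g0) \<zeta> \<partial>lborel)"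
    by (rule Bochner_Integration.integral_add[OF Bochner_Integration.integrable_add[OF i3 i4] i5])
  also have "(\<integral>\<zeta>. (f - f0) (\<xi>-\<zeta>) * (g - g0) \<zeta> + (f - f0) (\<xi>-\<zeta>) * g0 \<zeta> \<partial>lborel)
     = (\<integral>\<zeta>. (f - f0) (\<xi>-\<zeta>) * (g - g0) \<zeta> \<partial>lborel) + (\<integral>\<zeta>. (f - f0) (\<xi>-\<zeta>) * g0 \<zeta> \<partial>lborel)"
    by (rule Bochner_Integration.integral_add[OF i3 i4])
  finally have e: "(\<integral>\<zeta>. f (\<xi>-\<zeta>) * g \<zeta> \<partial>lborel) - (\<integral>\<zeta>. f0 (\<xi>-\<zeta>) * g0 \<zeta> \<partial>lborel)
     = (\<integral>\<zeta>. (f - f0) (\<xi>-\<zeta>) * (g - g0) \<zeta> \<partial>lborel) + (\<integral>\<zeta>. (f - f0) (\<xi>-\<zeta>) * g0 \<zeta> \<partial>lborel) + (\<integral>\<zeta>. f0 (\<xi>-\<zeta>) * (g - g0) \<zeta> \<partial>lborel)" .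
  show ?thesis unfolding fconv_def
    by (simp only: right_diff_distrib[symmetric] distrib_left[symmetric] e)
qed

lemma Hs_norm_zero: "Hs_norm s (\<lambda>x. 0) = 0"
  by (simp add: Hs_norm_def Hs_sq_def)

lemma trunc_lim:
  fixes f g :: "real \<Rightarrow> complex"
  assumes [measurable]: "f \<in> borel_measurable borel" "g \<in> borel_measurable borel"
    and F: "Hs_sq 0 f < \<infinity>" and G: "Hs_sq 0 g < \<infinity>"
  shows "(\<lambda>n. fconv (tr n f) (tr n g) \<xi>) \<longlonglongrightarrow> fconv f g \<xi>"
proof -
  have w: "integrable lborel (\<lambda>\<zeta>. norm (f (\<xi>-\<zeta>) * g \<zeta>))"
    by (intro integrable_norm conv_integrable) (use F G in auto)
  have "(\<lambda>n. \<integral>\<zeta>. tr n f (\<xi>-\<zeta>) * tr n g \<zeta> \<partial>lborel) \<longlonglongrightarrow> (\<integral>\<zeta>. f (\<xi>-\<zeta>) * g \<zeta> \<partial>lborel)"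
  proof (rule integral_dominated_convergence[OF _ _ w])
    show "(\<lambda>\<zeta>. f (\<xi>-\<zeta>) * g \<zeta>) \<in> borel_measurable lborel" by measurable
    show "(\<lambda>\<zeta>. tr n f (\<xi>-\<zeta>) * tr n g \<zeta>) \<in> borel_measurable lborel" for n by measurable
    show "AE \<zeta> in lborel. (\<lambda>n. tr n f (\<xi>-\<zeta>) * tr n g \<zeta>) \<longlonglongrightarrow> f (\<xi>-\<zeta>) * g \<zeta>"
    proof (intro AE_I2 tendsto_eventually)
      fix \<zeta> :: real
      obtain N :: nat where N: "max \<bar>\<xi>-\<zeta>\<bar> \<bar>\<zeta>\<bar> \<le> real N" using real_arch_simple by blast
      show "\<forall>\<^sub>F n in sequentially. tr n f (\<xi>-\<zeta>) * tr n g \<zeta> = f (\<xi>-\<zeta>) * g \<zeta>"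
        unfolding eventually_sequentially
      proof (intro exI[of _ N] allI impI)
        fix n assume "N \<le> n"
        hence "real N \<le> real n" by simp
        thus "tr n f (\<xi>-\<zeta>) * tr n g \<zeta> = f (\<xi>-\<zeta>) * g \<zeta>" using N unfolding tr_def by auto
      qed
    qed
    show "AE \<zeta> in lborel. norm (tr n f (\<xi>-\<zeta>) * tr n g \<zeta>) \<le> norm (f (\<xi>-\<zeta>) * g \<zeta>)" for n
      by (intro AE_I2) (auto simp: tr_def norm_mult)
  qed
  thus ?thesis unfolding fconv_def by (intro tendsto_mult_left)
qed


lemma X_slice:
  assumes "in_X s T u" "y \<in> {0..T}"
  shows "u y \<in> borel_measurable borel" "Hs_sq s (u y) < \<infinity>"
  using assms unfolding in_X_def in_Hs_def by auto

lemma X_cont_seq: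
  assumes u: "in_X s T u" and y0: "y0 \<in> {0..T}" and xs: "\<And>m. x m \<in> {0..T}" and lim: "x \<longlonglongrightarrow> y0"
  shows "(\<lambda>m. Hs_norm s (u (x m) - u y0)) \<longlonglongrightarrow> 0"
proof -
  have t: "((\<lambda>t. Hs_norm s (u t - u y0)) \<longlongrightarrow> 0) (at y0 within {0..T})"
    using u y0 unfolding in_X_def by auto
  have "u y0 - u y0 = (\<lambda>x. 0)" by (simp add: fun_eq_iff)
  hence z: "Hs_norm s (u y0 - u y0) = 0" using Hs_norm_zero[of s] by simp
  have "continuous (at y0 within {0..T}) (\<lambda>t. Hs_norm s (u t - u y0))"
    unfolding continuous_within z using t .
  hence "((\<lambda>t. Hs_norm s (u t - u y0)) \<circ> x) \<longlonglongrightarrow> Hs_norm s (u y0 - u y0)"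
    unfolding continuous_within_sequentially using xs lim by blast
  thus ?thesis unfolding z comp_def .
qed

lemma trunc_cont:
  assumes s: "s < 0" and u: "in_X s T u" and v: "in_X s T v" and y0: "y0 \<in> {0..T}"
    and xs: "\<And>m. x m \<in> {0..T}" and lim: "x \<longlonglongrightarrow> y0"
  shows "(\<lambda>m. fconv (tr n (u (x m))) (tr n (v (x m))) \<xi>) \<longlonglongrightarrow> fconv (tr n (u y0)) (tr n (v y0)) \<xi>"
proof -
  define N where "N = (1 + (real n)\<^sup>2) powr (-s)"
  have N: "N \<ge> 0" unfolding N_def by simp
  define du where "du m = Hs_norm s (u (x m) - u y0)" for m
  define dv where "dv m = Hs_norm s (v (x m) - v y0)" for m
  have du: "du \<longlonglongrightarrow> 0" unfolding du_def by (rule X_cont_seq[OF u y0 xs lim])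
  have dv: "dv \<longlonglongrightarrow> 0" unfolding dv_def by (rule X_cont_seq[OF v y0 xs lim])
  note um = X_slice[OF u xs] and vm = X_slice[OF v xs] and u0 = X_slice[OF u y0] and v0 = X_slice[OF v y0]
  have bnd: "norm (fconv (tr n (u (x m))) (tr n (v (x m))) \<xi> - fconv (tr n (u y0)) (tr n (v y0)) \<xi>)
     \<le> N * (du m * dv m) + N * (du m * Hs_norm s (v y0)) + N * (Hs_norm s (u y0) * dv m)" for m
  proof -
    have [measurable]: "u (x m) \<in> borel_measurable borel" "v (x m) \<in> borel_measurable borel"
      "u y0 \<in> borel_measurable borel" "v y0 \<in> borel_measurable borel"
      using um vm u0 v0 by auto
    have md[measurable]: "u (x m) - u y0 \<in> borel_measurable borel" "v (x m) - v y0 \<in> borel_measurable borel"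
      by (simp_all add: fun_diff_def)
    have fu: "Hs_sq s (u (x m) - u y0) < \<infinity>" by (rule Hs_sq_diff_fin) (use um u0 in auto)
    have fv: "Hs_sq s (v (x m) - v y0) < \<infinity>" by (rule Hs_sq_diff_fin) (use vm v0 in auto)
    have e: "fconv (tr n (u (x m))) (tr n (v (x m))) \<xi> - fconv (tr n (u y0)) (tr n (v y0)) \<xi>
      = fconv (tr n (u (x m) - u y0)) (tr n (v (x m) - v y0)) \<xi> + fconv (tr n (u (x m) - u y0)) (tr n (v y0)) \<xi>
        + fconv (tr n (u y0)) (tr n (v (x m) - v y0)) \<xi>"
    proof -
      have t1: "Hs_sq 0 (tr n (u (x m))) < \<infinity>" "Hs_sq 0 (tr n (v (x m))) < \<infinity>"
        "Hs_sq 0 (tr n (u y0)) < \<infinity>" "Hs_sq 0 (tr n (v y0)) < \<infinity>"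
        using tr_fin[of s "u (x m)" n] tr_fin[of s "v (x m)" n] tr_fin[of s "u y0" n] tr_fin[of s "v y0" n]
          s um vm u0 v0 by auto
      show ?thesis unfolding tr_diff by (rule fconv_bilin[OF _ _ _ _ t1(1,3,2,4)]) auto
    qed
    have b1: "cmod (fconv (tr n (u (x m) - u y0)) (tr n (v (x m) - v y0)) \<xi>) \<le> N * (du m * dv m)"
      using trunc_bound[OF _ md fu fv, of n \<xi>] s unfolding N_def du_def dv_def by (simp add: mult.assoc)
    have b2: "cmod (fconv (tr n (u (x m) - u y0)) (tr n (v y0)) \<xi>) \<le> N * (du m * Hs_norm s (v y0))"
      using trunc_bound[OF _ md(1) _ fu v0(2), of n \<xi>] s v0 unfolding N_def du_def by (simp add: mult.assoc)
    have b3: "cmod (fconv (tr n (u y0)) (tr n (v (x m) - v y0)) \<xi>) \<le> N * (Hs_norm s (u y0) * dv m)"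
      using trunc_bound[OF _ _ md(2) u0(2) fv, of n \<xi>] s u0 unfolding N_def dv_def by (simp add: mult.assoc)
    show ?thesis unfolding e using b1 b2 b3 norm_triangle_ineq[of "fconv (tr n (u (x m) - u y0)) (tr n (v (x m) - v y0)) \<xi> + fconv (tr n (u (x m) - u y0)) (tr n (v y0)) \<xi>" "fconv (tr n (u y0)) (tr n (v (x m) - v y0)) \<xi>"]
      norm_triangle_ineq[of "fconv (tr n (u (x m) - u y0)) (tr n (v (x m) - v y0)) \<xi>" "fconv (tr n (u (x m) - u y0)) (tr n (v y0)) \<xi>"]
      by linarith
  qed
  have g: "(\<lambda>m. N * (du m * dv m) + N * (du m * Hs_norm s (v y0)) + N * (Hs_norm s (u y0) * dv m)) \<longlonglongrightarrow> 0"
    using tendsto_add[OF tendsto_add[OF tendsto_mult_left[OF tendsto_mult[OF du dv]] tendsto_mult_left[OF tendsto_mult_right[OF du]]] tendsto_mult_left[OF tendsto_mult_left[OF dv]]]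
    by simp
  have "(\<lambda>m. fconv (tr n (u (x m))) (tr n (v (x m))) \<xi> - fconv (tr n (u y0)) (tr n (v y0)) \<xi>) \<longlonglongrightarrow> 0"
    by (rule Lim_null_comparison[OF always_eventually g]) (use bnd in blast)
  thus ?thesis by (rule LIM_zero_cancel)
qed


lemma round_lim:
  fixes y t :: real
  assumes y: "0 < y" "y \<le> t"
  defines "x \<equiv> \<lambda>m::nat. max 0 (min t (real_of_int \<lceil>real (Suc m) * y\<rceil> / real (Suc m)))"
  shows "x \<longlonglongrightarrow> y" "\<And>m. x m \<in> {0..t}"
proof -
  have b: "y \<le> x m \<and> x m \<le> y + inverse (real (Suc m))" for m
  proof -
    define c where "c = real (Suc m)"
    have c: "c > 0" unfolding c_def by simp
    have "c * y \<le> real_of_int \<lceil>c * y\<rceil>" by simp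
    hence l: "y \<le> real_of_int \<lceil>c * y\<rceil> / c" using c by (simp add: field_simps)
    have "real_of_int \<lceil>c * y\<rceil> < c * y + 1" by linarith
    hence h: "real_of_int \<lceil>c * y\<rceil> / c \<le> y + inverse c" using c by (simp add: field_simps)
    show ?thesis unfolding x_def c_def[symmetric] using l h y by auto
  qed
  show "x \<longlonglongrightarrow> y"
  proof (rule tendsto_sandwich[of "\<lambda>m. y" _ _ "\<lambda>m. y + inverse (real (Suc m))"])
    show "\<forall>\<^sub>F m in sequentially. y \<le> x m" using b by simp
    show "\<forall>\<^sub>F m in sequentially. x m \<le> y + inverse (real (Suc m))" using b by simp
    show "(\<lambda>m. y) \<longlonglongrightarrow> y" by simp
    show "(\<lambda>m. y + inverse (real (Suc m))) \<longlonglongrightarrow> y"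
      using tendsto_add[OF tendsto_const[of y] LIMSEQ_inverse_real_of_nat] by simp
  qed
  show "x m \<in> {0..t}" for m using b[of m] y unfolding x_def by auto
qed

lemma duhamel_meas:
  assumes s: "s < 0" and u: "in_X s T u" and v: "in_X s T v" and t: "0 < t" "t \<le> T"
  shows "duhamel \<beta> \<eta> u v t \<in> borel_measurable lborel"
proof -
  define Cn where "Cn n y \<xi> = fconv (tr n (u y)) (tr n (v y)) \<xi>" for n y \<xi>
  define q where "q m i = max 0 (min t (real_of_int i / real (Suc m)))" for m :: nat and i :: int
  have q: "q m i \<in> {0..T}" for m i unfolding q_def using t by auto
  have Cnm: "(\<lambda>\<xi>. Cn n y \<xi>) \<in> borel_measurable borel" if "y \<in> {0..T}" for n y
    unfolding Cn_def using X_slice[OF u that] X_slice[OF v that] by (intro conv_meas tr_meas) auto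
  define Knm where "Knm n m p = indicator {0<..t} (snd p) *\<^sub>R Cn n (q m \<lceil>real (Suc m) * snd p\<rceil>) (fst p)"
    for n m and p :: "real \<times> real"
  have Knm_meas: "Knm n m \<in> borel_measurable (lborel \<Otimes>\<^sub>M lborel)" for n m
  proof -
    have "(\<lambda>p. (\<lambda>i p. indicator {0<..t} (snd p) *\<^sub>R Cn n (q m i) (fst p)) (\<lceil>real (Suc m) * snd p\<rceil>) p)
        \<in> borel_measurable (lborel \<Otimes>\<^sub>M lborel)"
    proof (rule measurable_compose_countable)
      fix i :: int
      have [measurable]: "(\<lambda>\<xi>. Cn n (q m i) \<xi>) \<in> borel_measurable borel" by (rule Cnm[OF q])
      show "(\<lambda>p. indicator {0<..t} (snd p) *\<^sub>R Cn n (q m i) (fst p)) \<in> borel_measurable (lborel \<Otimes>\<^sub>M lborel)"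
        by measurable
    next
      show "(\<lambda>p. \<lceil>real (Suc m) * snd p\<rceil>) \<in> measurable (lborel \<Otimes>\<^sub>M lborel) (count_space UNIV)"
        by measurable
    qed
    thus ?thesis unfolding Knm_def by simp
  qed
  define Kn where "Kn n p = indicator {0<..t} (snd p) *\<^sub>R Cn n (snd p) (fst p)" for n and p :: "real \<times> real"
  have Kn_meas: "Kn n \<in> borel_measurable (lborel \<Otimes>\<^sub>M lborel)" for n
  proof (rule borel_measurable_LIMSEQ_metric[OF Knm_meas])
    fix p :: "real \<times> real"
    obtain \<xi> y where p: "p = (\<xi>, y)" by fastforce
    show "(\<lambda>m. Knm n m p) \<longlonglongrightarrow> Kn n p"
    proof (cases "y \<in> {0<..t}")
      case False thus ?thesis unfolding Knm_def Kn_def p by simp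
    next
      case True
      hence y: "0 < y" "y \<le> t" by auto
      note r = round_lim[OF y]
      have xs: "max 0 (min t (real_of_int \<lceil>real (Suc m) * y\<rceil> / real (Suc m))) \<in> {0..T}" for m
        using r(2)[of m] t by auto
      have "(\<lambda>m. Cn n (q m \<lceil>real (Suc m) * y\<rceil>) \<xi>) \<longlonglongrightarrow> Cn n y \<xi>"
        unfolding Cn_def q_def by (rule trunc_cont[OF s u v _ xs r(1)]) (use y t in auto)
      thus ?thesis unfolding Knm_def Kn_def p using True by simp
    qed
  qed
  define K where "K p = indicator {0<..t} (snd p) *\<^sub>R fconv (u (snd p)) (v (snd p)) (fst p)" for p :: "real \<times> real"
  have K_meas: "K \<in> borel_measurable (lborel \<Otimes>\<^sub>M lborel)"
  proof (rule borel_measurable_LIMSEQ_metric[OF Kn_meas])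
    fix p :: "real \<times> real"
    obtain \<xi> y where p: "p = (\<xi>, y)" by fastforce
    show "(\<lambda>n. Kn n p) \<longlonglongrightarrow> K p"
    proof (cases "y \<in> {0<..t}")
      case False thus ?thesis unfolding Kn_def K_def p by simp
    next
      case True
      hence y: "y \<in> {0<..T}" "y \<in> {0..T}" using t by auto
      have L: "Hs_sq 0 (u y) < \<infinity>" "Hs_sq 0 (v y) < \<infinity>" using u v y unfolding in_X_def in_Hs_def by auto
      have "(\<lambda>n. Cn n y \<xi>) \<longlonglongrightarrow> fconv (u y) (v y) \<xi>"
        unfolding Cn_def by (rule trunc_lim) (use X_slice[OF u y(2)] X_slice[OF v y(2)] L in auto)
      thus ?thesis unfolding Kn_def K_def p using True by simp
    qed
  qed
  have C0[measurable]: "(\<lambda>\<xi>. fconv (u 0) (v 0) \<xi>) \<in> borel_measurable borel"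
    using X_slice[OF u, of 0] X_slice[OF v, of 0] t by (intro conv_meas) auto
  have [measurable]: "K \<in> borel_measurable (lborel \<Otimes>\<^sub>M lborel)" by (rule K_meas)
  define H where "H \<xi> y = exp (complex_of_real (t - y) * (\<i> * complex_of_real (qsym \<beta> \<xi>) - complex_of_real (psym \<eta> \<xi>)))
             * (\<i> * complex_of_real \<xi>) * (K (\<xi>, y) + indicator {0} y *\<^sub>R fconv (u 0) (v 0) \<xi>)" for \<xi> y
  have H_meas: "case_prod H \<in> borel_measurable (lborel \<Otimes>\<^sub>M lborel)"
    unfolding H_def qsym_def psym_def case_prod_beta' by measurable
  have eq: "duhamel \<beta> \<eta> u v t = (\<lambda>\<xi>. \<integral>y. H \<xi> y \<partial>lborel)"
  proof
    fix \<xi>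
    show "duhamel \<beta> \<eta> u v t \<xi> = (\<integral>y. H \<xi> y \<partial>lborel)"
      unfolding duhamel_def set_lebesgue_integral_def
    proof (rule Bochner_Integration.integral_cong[OF refl])
      fix y
      show "indicator {0..t} y *\<^sub>R (exp (complex_of_real (t - y) * (\<i> * complex_of_real (qsym \<beta> \<xi>) - complex_of_real (psym \<eta> \<xi>)))
             * (\<i> * complex_of_real \<xi>) * fconv (u y) (v y) \<xi>) = H \<xi> y"
        unfolding H_def K_def using t by (cases "y = 0"; cases "y \<in> {0..t}") (auto simp: indicator_def)
    qed
  qed
  show ?thesis unfolding eq
    by (rule lborel.borel_measurable_lebesgue_integral[OF H_meas])
qed


lemma hs_from_sq:
  assumes H: "Hs_sq \<sigma> D \<le> ennreal ((B * t powr e) * (G * exp (\<eta>*t) * X\<^sup>2) * (B * t powr e))"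
    and B: "B \<ge> 0" and G: "G \<ge> 0" and X: "X \<ge> 0"
  shows "Hs_norm \<sigma> D \<le> (B * sqrt (G/(2*pi))) * t powr e * X * exp (\<eta>*t/2)"
proof -
  define K where "K = (B * t powr e) * (G * exp (\<eta>*t) * X\<^sup>2) * (B * t powr e)"
  have K: "K \<ge> 0" unfolding K_def using B G by simp
  have "enn2real (Hs_sq \<sigma> D) \<le> K" using H K unfolding K_def[symmetric] by (intro enn2real_leI)
  hence "Hs_norm \<sigma> D \<le> sqrt (K/(2*pi))" unfolding Hs_norm_def
    by (intro real_sqrt_le_mono divide_right_mono) auto
  also have "sqrt (K/(2*pi)) = (B * sqrt (G/(2*pi))) * t powr e * X * exp (\<eta>*t/2)"
  proof (rule real_sqrt_unique)
    have "(exp (\<eta>*t/2))\<^sup>2 = exp (\<eta>*t)" unfolding power2_eq_square exp_add[symmetric] by simp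
    moreover have "(sqrt (G/(2*pi)))\<^sup>2 = G/(2*pi)" using G by simp
    ultimately show "((B * sqrt (G/(2*pi))) * t powr e * X * exp (\<eta>*t/2))\<^sup>2 = K/(2*pi)"
      unfolding K_def by (simp add: power_mult_distrib power2_eq_square) (simp add: algebra_simps)
    show "0 \<le> (B * sqrt (G/(2*pi))) * t powr e * X * exp (\<eta>*t/2)" using B G X by simp
  qed
  finally show ?thesis .
qed

lemma X_norm_nonneg:
  assumes "in_X s T u" "t \<in> {0<..T}"
  shows "X_norm s T u \<ge> 0"
proof -
  have "Xweight s u t \<le> X_norm s T u"
    unfolding X_norm_def using assms by (intro cSup_upper) (auto simp: in_X_def)
  moreover have "Xweight s u t \<ge> 0" unfolding Xweight_def using Hs_norm_nonneg[of s "u t"] Hs_norm_nonneg[of 0 "u t"] by simp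
  ultimately show ?thesis by simp
qed

theorem proposition2p4:
  fixes \<beta> \<eta> s :: real
  assumes "\<beta> > 0" and "\<eta> > 0" and "-1/2 < s" and "s < 0"
  shows "\<exists>C>0. \<forall>T u v. 0 \<le> T \<longrightarrow> T \<le> 1 \<longrightarrow> in_X s T u \<longrightarrow> in_X s T v \<longrightarrow>
           (\<forall>t\<in>{0<..T}. in_Hs s (duhamel \<beta> \<eta> u v t) \<and> in_L2 (duhamel \<beta> \<eta> u v t) \<and>
              Xweight s (duhamel \<beta> \<eta> u v) t
                \<le> C * exp (\<eta> * T / 2) * T powr ((1 + 2 * s) / 4) * X_norm s T u * X_norm s T v)"
proof -
  note eta = assms(2) and s1 = assms(3) and s2 = assms(4)
  define Cs where "Cs = BJ s s * sqrt (CG s \<eta>/(2*pi))"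
  define C0 where "C0 = BJ 0 s * sqrt (CG 0 \<eta>/(2*pi))"
  have BJs: "BJ s s \<ge> 0" "BJ 0 s \<ge> 0" unfolding BJ_def using s1 s2 by (auto intro!: add_nonneg_nonneg)
  have CGs: "CG s \<eta> \<ge> 0" "CG 0 \<eta> \<ge> 0" unfolding CG_def using s1 s2 eta by auto
  have Cs: "Cs \<ge> 0" "C0 \<ge> 0" unfolding Cs_def C0_def using BJs CGs by auto
  show ?thesis
  proof (intro exI[of _ "Cs + C0 + 1"] conjI allI impI ballI)
    show "Cs + C0 + 1 > 0" using Cs by simp
    fix T u v t
    assume T: "0 \<le> T" "T \<le> 1" and u: "in_X s T u" and v: "in_X s T v" and t: "t \<in> {0<..T}"
    have t0: "0 < t" "t \<le> T" using t by auto
    define X where "X = X_norm s T u * X_norm s T v"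
    have X: "X \<ge> 0" unfolding X_def using X_norm_nonneg[OF u t] X_norm_nonneg[OF v t] by simp
    define D where "D = duhamel \<beta> \<eta> u v t"
    have bnd: "\<And>\<xi>. ennreal (cmod (D \<xi>)) \<le> (\<integral>\<^sup>+ y. ennreal (indicator {0<..<t} y *
                 (exp (-((t-y)*psym \<eta> \<xi>)) * \<bar>\<xi>\<bar> * (y powr s * X))) \<partial>lborel)"
      unfolding D_def X_def by (rule duhamel_ptwise[OF s2 u v t0])
    have meas: "D \<in> borel_measurable lborel" unfolding D_def by (rule duhamel_meas[OF s2 u v t0])
    have Hs: "Hs_sq s D \<le> ennreal ((BJ s s * t powr (1/4-s/2+s)) * (CG s \<eta> * exp (\<eta>*t) * X\<^sup>2) * (BJ s s * t powr (1/4-s/2+s)))"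
      by (rule main_est[OF _ _ s1 s2 eta t0(1) X bnd]) (use s1 s2 in auto)
    have H0: "Hs_sq 0 D \<le> ennreal ((BJ 0 s * t powr (1/4-0/2+s)) * (CG 0 \<eta> * exp (\<eta>*t) * X\<^sup>2) * (BJ 0 s * t powr (1/4-0/2+s)))"
      by (rule main_est[OF _ _ s1 s2 eta t0(1) X bnd]) auto
    show "in_Hs s (D)" unfolding in_Hs_def using meas Hs by (auto simp: top_unique le_less_trans[OF Hs])
    show "in_L2 D" unfolding in_Hs_def using meas H0 by (auto simp: le_less_trans[OF H0])
    have n1: "Hs_norm s D \<le> Cs * t powr (1/4-s/2+s) * X * exp (\<eta>*t/2)"
      unfolding Cs_def by (rule hs_from_sq[OF Hs BJs(1) CGs(1) X])
    have n2: "L2_norm D \<le> C0 * t powr (1/4-0/2+s) * X * exp (\<eta>*t/2)"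
      unfolding C0_def by (rule hs_from_sq[OF H0 BJs(2) CGs(2) X])
    have e1: "1/4-s/2+s = (1 + 2 * s) / 4" by (simp add: field_simps)
    have ex: "\<bar>s\<bar>/2 + (1/4-0/2+s) = (1 + 2 * s) / 4" using s2 by (simp add: field_simps)
    have e2: "t powr (\<bar>s\<bar>/2) * t powr (1/4-0/2+s) = t powr ((1 + 2 * s) / 4)"
      by (simp only: powr_add[symmetric] ex)
    have "Xweight s (duhamel \<beta> \<eta> u v) t = Hs_norm s D + t powr (\<bar>s\<bar>/2) * L2_norm D" unfolding Xweight_def D_def ..
    also have "\<dots> \<le> Cs * t powr ((1 + 2 * s) / 4) * X * exp (\<eta>*t/2) + t powr (\<bar>s\<bar>/2) * (C0 * t powr (1/4-0/2+s) * X * exp (\<eta>*t/2))"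
      using n1 n2 e1 by (intro add_mono mult_left_mono) auto
    also have "\<dots> = (Cs + C0) * t powr ((1 + 2 * s) / 4) * X * exp (\<eta>*t/2)"
      using e2 by (simp add: algebra_simps)
    also have "\<dots> \<le> (Cs + C0 + 1) * T powr ((1 + 2 * s) / 4) * X * exp (\<eta>*T/2)"
    proof -
      have "t powr ((1 + 2 * s) / 4) \<le> T powr ((1 + 2 * s) / 4)" using t0 s1 by (intro powr_mono2) auto
      moreover have "exp (\<eta>*t/2) \<le> exp (\<eta>*T/2)" using t0 eta by simp
      ultimately show ?thesis using Cs X by (intro mult_mono) auto
    qed
    finally show "Xweight s (duhamel \<beta> \<eta> u v) t \<le> (Cs + C0 + 1) * exp (\<eta> * T / 2) * T powr ((1 + 2 * s) / 4) * X_norm s T u * X_norm s T v"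
      unfolding X_def by (simp add: ac_simps)
  qed
qed


end
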